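(* Let $\alpha:I\to(0,\infty)$ and $a:I\to\mathbb{R}$ be smooth, and let $v$ be a smooth solution, with values in $I$, of $$v_t+a(v)v_x+\partial_x\big(\alpha(v)\partial_x(\alpha(v)\partial_x v)\big)=0.$$ For every integer $k\geq1$, $v_k:=(\alpha(v)\partial_x)^k v$ satisfies $$\partial_t v_k+a(v)\partial_x v_k+\partial_x\big(\alpha(v)\partial_x(\alpha(v)\partial_x v_k)\big)=f_k\,\partial_x^2 v_k+g_k\,\partial_x v_k+h_k,$$ where: (i) $f_k=(k-1)\alpha'(v)\,v_1=(k-1)\alpha(v)\partial_x(\alpha(v))$; (ii) $g_k=A_k(v)\,v_1^2+B_k(v)\,v_2$ for some continuous functions $A_k,B_k$ on $I$ (built from $\alpha$ and its derivatives), i.e. $g_k$ is of homogeneous weight $2$ in $(v_1,v_2)$; (iii) $h_k$ is a finite sum of terms of the form $\beta(v)\prod_{j=1}^{N}\partial_x^{\gamma_j}v$ with $1\le\gamma_j\le k$ for all $j$, where each $\beta$ is a continuous function on $I$ built from $\alpha$, $a$ and their derivatives, and where the weight $\sum_j\gamma_j$ of each term equals either $k+1$ or $k+3$. (For instance $f_1=g_1=0$, $h_1=-\frac{a'(v)}{\alpha(v)}v_1^2$.)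
   Context: Notation: $\alpha'$ denotes the derivative of the function $\alpha$ with respect to its argument, and $\alpha(v)$, $a(v)$ denote compositions with $v(t,x)$. The weight of a monomial $\beta(v)\prod_j\partial_x^{\gamma_j}v$ is the total number of derivatives $\sum_j\gamma_j$; in terms of the $v_j$, $v_j$ has weight $j$. *)

theory Defs
  imports "HOL-Analysis.Analysis"
begin

definition dx :: "(real \<Rightarrow> real \<Rightarrow> real) \<Rightarrow> real \<Rightarrow> real \<Rightarrow> real" where
  "dx w = (\<lambda>t x. deriv (\<lambda>y. w t y) x)"

definition dt :: "(real \<Rightarrow> real \<Rightarrow> real) \<Rightarrow> real \<Rightarrow> real \<Rightarrow> real" where
  "dt w = (\<lambda>t x. deriv (\<lambda>s. w s x) t)"

fun pd :: "bool list \<Rightarrow> (real \<Rightarrow> real \<Rightarrow> real) \<Rightarrow> real \<Rightarrow> real \<Rightarrow> real" where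
  "pd [] w = w"
| "pd (b # bs) w = (if b then dt (pd bs w) else dx (pd bs w))"

definition smooth_on :: "real set \<Rightarrow> (real \<Rightarrow> real) \<Rightarrow> bool" where
  "smooth_on I f \<longleftrightarrow> (\<forall>n. \<forall>x\<in>I. ((deriv ^^ n) f) field_differentiable (at x))"

definition smooth2_on :: "(real \<times> real) set \<Rightarrow> (real \<Rightarrow> real \<Rightarrow> real) \<Rightarrow> bool" where
  "smooth2_on \<Omega> w \<longleftrightarrow>
     (\<forall>ws. continuous_on \<Omega> (\<lambda>(t, x). pd ws w t x) \<and>
       (\<forall>(t, x)\<in>\<Omega>. (\<lambda>y. pd ws w t y) field_differentiable (at x) \<and>
                     (\<lambda>s. pd ws w s x) field_differentiable (at t)))"

definition Lop :: "(real \<Rightarrow> real) \<Rightarrow> (real \<Rightarrow> real) \<Rightarrow> (real \<Rightarrow> real \<Rightarrow> real)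
                   \<Rightarrow> (real \<Rightarrow> real \<Rightarrow> real) \<Rightarrow> real \<Rightarrow> real \<Rightarrow> real" where
  "Lop \<alpha> a v w = (\<lambda>t x. dt w t x + a (v t x) * dx w t x
      + dx (\<lambda>t x. \<alpha> (v t x) * dx (\<lambda>t x. \<alpha> (v t x) * dx w t x) t x) t x)"

definition vk :: "(real \<Rightarrow> real) \<Rightarrow> (real \<Rightarrow> real \<Rightarrow> real) \<Rightarrow> nat \<Rightarrow> real \<Rightarrow> real \<Rightarrow> real" where
  "vk \<alpha> v k = ((\<lambda>w t x. \<alpha> (v t x) * dx w t x) ^^ k) v"

text \<open>A sum of monomials  beta(v) * prod_j d_x^{gamma_j} v, each given as (beta, [gamma_1,...,gamma_N]).\<close>
definition monsum :: "((real \<Rightarrow> real) \<times> nat list) list \<Rightarrow> (real \<Rightarrow> real \<Rightarrow> real) \<Rightarrow> real \<Rightarrow> real \<Rightarrow> real" where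
  "monsum ts v = (\<lambda>t x. (\<Sum>(\<beta>, gs)\<leftarrow>ts. \<beta> (v t x) * (\<Prod>g\<leftarrow>gs. (dx ^^ g) v t x)))"

end

theory Submission
  imports Defs
begin


lemma open_slice_t: "open \<Omega> \<Longrightarrow> open {z::real. (z, x::real) \<in> \<Omega>}"
proof -
  assume "open \<Omega>"
  have "{z. (z, x) \<in> \<Omega>} = (\<lambda>z. (z, x)) -` \<Omega>" by auto
  moreover have "open ((\<lambda>z::real. (z, x)) -` \<Omega>)"
    by (rule continuous_open_vimage[OF \<open>open \<Omega>\<close>]) (auto intro!: continuous_intros)
  ultimately show ?thesis by simp
qed

lemma open_slice_x: "open \<Omega> \<Longrightarrow> open {z::real. (t::real, z) \<in> \<Omega>}"
proof -
  assume "open \<Omega>"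
  have "{z. (t, z) \<in> \<Omega>} = (\<lambda>z. (t, z)) -` \<Omega>" by auto
  moreover have "open ((\<lambda>z::real. (t, z)) -` \<Omega>)"
    by (rule continuous_open_vimage[OF \<open>open \<Omega>\<close>]) (auto intro!: continuous_intros)
  ultimately show ?thesis by simp
qed

lemma clairaut:
  fixes f :: "real \<Rightarrow> real \<Rightarrow> real"
  assumes O: "open \<Omega>" and sf: "smooth2_on \<Omega> f" and p: "(t0, x0) \<in> \<Omega>"
  shows "dt (dx f) t0 x0 = dx (dt f) t0 x0"
proof -
  obtain r where r: "r > 0" "ball (t0, x0) r \<subseteq> \<Omega>" using O p open_contains_ball by blast
  define e where "e = r / 2"
  have e: "e > 0" using r by (simp add: e_def)
  define a where "a = x0 - e"
  define U where "U = ball t0 e"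
  have box: "(s, y) \<in> \<Omega>" if "s \<in> U" "y \<in> {a..x0+e}" for s y
  proof -
    have "dist (s, y) (t0, x0) = sqrt ((dist s t0)\<^sup>2 + (dist y x0)\<^sup>2)" by (simp add: dist_Pair_Pair)
    also have "\<dots> \<le> \<bar>dist s t0\<bar> + \<bar>dist y x0\<bar>" by (rule sqrt_sum_squares_le_sum_abs)
    also have "\<dots> < r"
    proof -
      have 1: "\<bar>s - t0\<bar> < e" using that(1) by (simp add: U_def dist_real_def abs_minus_commute)
      have 2: "\<bar>y - x0\<bar> \<le> e" using that(2) by (auto simp: a_def)
      show ?thesis using 1 2 by (simp add: dist_real_def e_def)
    qed
    finally show ?thesis using r by (auto simp: dist_commute)
  qed
  have fx_cont: "continuous_on \<Omega> (\<lambda>(s, y). pd ws f s y)" for ws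
    using sf by (simp add: smooth2_on_def)
  have difx: "(\<lambda>y. pd ws f s y) field_differentiable (at y)" if "(s, y) \<in> \<Omega>" for ws s y
    using sf that unfolding smooth2_on_def by blast
  have dift: "(\<lambda>s. pd ws f s y) field_differentiable (at s)" if "(s, y) \<in> \<Omega>" for ws s y
    using sf that unfolding smooth2_on_def by blast
  have derx: "((\<lambda>y. pd ws f s y) has_field_derivative pd (False # ws) f s y) (at y)" if "(s, y) \<in> \<Omega>" for ws s y
    using difx[OF that, of ws] by (simp add: DERIV_deriv_iff_field_differentiable[symmetric] dx_def)
  have dert: "((\<lambda>s. pd ws f s y) has_field_derivative pd (True # ws) f s y) (at s)" if "(s, y) \<in> \<Omega>" for ws s y
    using dift[OF that, of ws] by (simp add: DERIV_deriv_iff_field_differentiable[symmetric] dt_def)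
  have ftc: "f s x = f s a + integral {a..x} (\<lambda>y. dx f s y)" if s: "s \<in> U" and x: "x \<in> {a..x0+e}" for s x
  proof -
    have "((\<lambda>y. dx f s y) has_integral (f s x - f s a)) {a..x}"
    proof (rule fundamental_theorem_of_calculus)
      show "a \<le> x" using x by auto
      fix y assume y: "y \<in> {a..x}"
      have "(s, y) \<in> \<Omega>" using box[OF s] y x by auto
      from derx[OF this, of "[]"] show "((\<lambda>y. f s y) has_vector_derivative dx f s y) (at y within {a..x})"
        by (auto simp: has_real_derivative_iff_has_vector_derivative[symmetric] intro: has_field_derivative_at_within)
    qed
    then show ?thesis by (simp add: integral_unique)
  qed
  have cont_fxt: "continuous_on (U \<times> cbox a x) (\<lambda>(s, y). dt (dx f) s y)" if x: "x \<in> {a..x0+e}" for x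
  proof -
    have "continuous_on \<Omega> (\<lambda>(s, y). pd [True, False] f s y)" by (rule fx_cont)
    moreover have "U \<times> cbox a x \<subseteq> \<Omega>" using box x by auto
    ultimately show ?thesis by (auto intro: continuous_on_subset)
  qed
  have step2: "dt f s x = dt f s a + integral {a..x} (\<lambda>y. dt (dx f) s y)"
    if s: "s \<in> U" and x: "x \<in> {a..x0+e}" for s x
  proof -
    have L: "((\<lambda>s. integral (cbox a x) (\<lambda>y. dx f s y)) has_field_derivative
              integral (cbox a x) (\<lambda>y. dt (dx f) s y)) (at s within U)"
    proof (rule leibniz_rule_field_derivative)
      fix s' y assume s': "s' \<in> U" and y: "y \<in> cbox a x"
      have "(s', y) \<in> \<Omega>" using box[OF s'] y x by auto
      from dert[OF this, of "[False]"]
      show "((\<lambda>s. dx f s y) has_field_derivative dt (dx f) s' y) (at s' within U)"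
        by (auto intro: has_field_derivative_at_within)
    next
      fix s' assume s': "s' \<in> U"
      have "continuous_on (cbox a x) (\<lambda>y. pd [False] f s' y)"
        by (rule continuous_on_compose2[OF fx_cont, of _ "\<lambda>y. (s', y)", simplified])
           (use box[OF s'] x in \<open>auto intro!: continuous_intros\<close>)
      then show "(\<lambda>y. dx f s' y) integrable_on cbox a x" by (auto intro: integrable_continuous_real)
    next
      show "continuous_on (U \<times> cbox a x) (\<lambda>(s, y). dt (dx f) s y)" by (rule cont_fxt[OF x])
    qed (use s in \<open>auto simp: U_def\<close>)
    have oU: "open U" by (simp add: U_def)
    have atU: "at s within U = at s" using s unfolding U_def by (intro at_within_open) auto
    have cb: "cbox a x = {a..x}" by (rule box_real)
    have L': "((\<lambda>s. integral {a..x} (\<lambda>y. dx f s y)) has_field_derivative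
              integral {a..x} (\<lambda>y. dt (dx f) s y)) (at s)"
      using L unfolding atU cb .
    have "(s, a) \<in> \<Omega>" using box[OF s] x by auto
    from DERIV_add[OF dert[OF this, of "[]"] L']
    have D1: "((\<lambda>s. f s a + integral {a..x} (\<lambda>y. dx f s y)) has_field_derivative
              dt f s a + integral {a..x} (\<lambda>y. dt (dx f) s y)) (at s)" by simp
    have "((\<lambda>s. f s x) has_field_derivative dt f s a + integral {a..x} (\<lambda>y. dt (dx f) s y)) (at s)"
    proof (rule has_field_derivative_transform_within_open[OF _ oU s])
      fix z assume z: "z \<in> U"
      from ftc[OF z x] show "f z a + integral {a..x} (\<lambda>y. dx f z y) = f z x" by linarith
    qed (fact D1)
    then show ?thesis by (simp add: dt_def DERIV_imp_deriv)
  qed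
  have t0U: "t0 \<in> U" using e by (simp add: U_def)
  have cc: "continuous_on {a..x0+e} (\<lambda>y. dt (dx f) t0 y)"
    by (rule continuous_on_compose2[OF fx_cont[of "[True,False]"], of _ "\<lambda>y. (t0, y)", simplified])
       (use box[OF t0U] in \<open>auto intro!: continuous_intros\<close>)
  have "((\<lambda>x. integral {a..x} (\<lambda>y. dt (dx f) t0 y)) has_field_derivative dt (dx f) t0 x0) (at x0 within {a..x0+e})"
    by (rule integral_has_real_derivative[OF cc]) (use e in \<open>auto simp: a_def\<close>)
  then have "((\<lambda>x. integral {a..x} (\<lambda>y. dt (dx f) t0 y)) has_field_derivative dt (dx f) t0 x0) (at x0)"
    using e by (simp add: at_within_Icc_at a_def)
  then have "((\<lambda>x. dt f t0 a + integral {a..x} (\<lambda>y. dt (dx f) t0 y)) has_field_derivative dt (dx f) t0 x0) (at x0)"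
    by (auto intro!: derivative_eq_intros)
  then have "((\<lambda>x. dt f t0 x) has_field_derivative dt (dx f) t0 x0) (at x0)"
  proof (rule has_field_derivative_transform_within_open[where S="{a<..<x0+e}"])
    show "x0 \<in> {a<..<x0+e}" using e by (simp add: a_def)
    fix z assume z: "z \<in> {a<..<x0+e}"
    have "z \<in> {a..x0+e}" using z by auto
    from step2[OF t0U this] show "dt f t0 a + integral {a..z} (\<lambda>y. dt (dx f) t0 y) = dt f t0 z" by linarith
  qed auto
  then show ?thesis by (simp add: dx_def DERIV_imp_deriv)
qed


locale coef =
  fixes I :: "real set" and \<alpha> a :: "real \<Rightarrow> real"
  assumes openI: "open I" and sa: "smooth_on I \<alpha>" and sb: "smooth_on I a"
    and apos: "\<forall>y\<in>I. \<alpha> y > 0"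
begin

inductive good :: "(real \<Rightarrow> real) \<Rightarrow> bool" where
  gconst: "good (\<lambda>y. c)"
| gid: "good (\<lambda>y. y)"
| galpha: "good ((deriv ^^ j) \<alpha>)"
| ga: "good ((deriv ^^ j) a)"
| ginv: "good (\<lambda>y. inverse (\<alpha> y))"
| gadd: "good f \<Longrightarrow> good g \<Longrightarrow> good (\<lambda>y. f y + g y)"
| gmul: "good f \<Longrightarrow> good g \<Longrightarrow> good (\<lambda>y. f y * g y)"
| gcong: "good f \<Longrightarrow> (\<forall>y\<in>I. f y = g y) \<Longrightarrow> good g"

lemma ev_nhds: "y \<in> I \<Longrightarrow> (\<forall>z\<in>I. f z = g z) \<Longrightarrow> eventually (\<lambda>z. f z = g z) (nhds y)"
  unfolding eventually_nhds using openI by blast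

lemma good_der: "good f \<Longrightarrow> (\<forall>y\<in>I. (f has_field_derivative deriv f y) (at y)) \<and> good (deriv f)"
proof (induction rule: good.induct)
  case (gconst c)
  have "deriv (\<lambda>y. c) = (\<lambda>y. 0)" by (rule ext, rule DERIV_imp_deriv) auto
  then show ?case by (auto intro: good.gconst)
next
  case gid
  have "deriv (\<lambda>y. y) = (\<lambda>y. 1)" by (rule ext, rule DERIV_imp_deriv) auto
  then show ?case by (auto intro: good.gconst)
next
  case (galpha j)
  have "\<forall>y\<in>I. ((deriv ^^ j) \<alpha> has_field_derivative deriv ((deriv ^^ j) \<alpha>) y) (at y)"
    using sa unfolding smooth_on_def by (auto simp: DERIV_deriv_iff_field_differentiable)
  moreover have "good (deriv ((deriv ^^ j) \<alpha>))" using good.galpha[of "Suc j"] by simp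
  ultimately show ?case by blast
next
  case (ga j)
  have "\<forall>y\<in>I. ((deriv ^^ j) a has_field_derivative deriv ((deriv ^^ j) a) y) (at y)"
    using sb unfolding smooth_on_def by (auto simp: DERIV_deriv_iff_field_differentiable)
  moreover have "good (deriv ((deriv ^^ j) a))" using good.ga[of "Suc j"] by simp
  ultimately show ?case by blast
next
  case ginv
  have da: "\<forall>y\<in>I. (\<alpha> has_field_derivative deriv \<alpha> y) (at y)"
    using sa unfolding smooth_on_def DERIV_deriv_iff_field_differentiable by (metis funpow_0)
  have d: "((\<lambda>y. inverse (\<alpha> y)) has_field_derivative (- (deriv \<alpha> y * inverse (\<alpha> y ^ Suc (Suc 0))))) (at y)"
    if "y \<in> I" for y
    using DERIV_inverse_fun[OF da[rule_format, OF that]] apos that by auto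
  have "good (\<lambda>y. (-1) * ((deriv ^^ 1) \<alpha> y * (inverse (\<alpha> y) * inverse (\<alpha> y))))"
    by (intro good.gmul good.gconst good.galpha good.ginv)
  moreover have "\<forall>y\<in>I. (-1) * ((deriv ^^ 1) \<alpha> y * (inverse (\<alpha> y) * inverse (\<alpha> y))) = deriv (\<lambda>y. inverse (\<alpha> y)) y"
  proof
    fix y assume y: "y \<in> I"
    show "(-1) * ((deriv ^^ 1) \<alpha> y * (inverse (\<alpha> y) * inverse (\<alpha> y))) = deriv (\<lambda>y. inverse (\<alpha> y)) y"
      unfolding DERIV_imp_deriv[OF d[OF y]] by (simp add: power2_eq_square)
  qed
  ultimately have "good (deriv (\<lambda>y. inverse (\<alpha> y)))" by (rule good.gcong)
  moreover have "\<And>y. y \<in> I \<Longrightarrow> deriv (\<lambda>y. inverse (\<alpha> y)) y = - (deriv \<alpha> y * inverse (\<alpha> y ^ Suc (Suc 0)))"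
    using DERIV_imp_deriv[OF d] by simp
  ultimately show ?case using d by simp
next
  case (gadd f g)
  have d: "((\<lambda>y. f y + g y) has_field_derivative deriv f y + deriv g y) (at y)" if "y \<in> I" for y
    using gadd that by (auto intro!: derivative_eq_intros)
  have "good (\<lambda>y. deriv f y + deriv g y)" using gadd by (auto intro: good.gadd)
  moreover have "\<forall>y\<in>I. deriv f y + deriv g y = deriv (\<lambda>y. f y + g y) y"
    using DERIV_imp_deriv[OF d] by simp
  ultimately have "good (deriv (\<lambda>y. f y + g y))" by (rule good.gcong)
  moreover have "\<And>y. y \<in> I \<Longrightarrow> deriv (\<lambda>y. f y + g y) y = deriv f y + deriv g y"
    using DERIV_imp_deriv[OF d] by simp
  ultimately show ?case using d by simp
next
  case (gmul f g)
  have d: "((\<lambda>y. f y * g y) has_field_derivative deriv f y * g y + f y * deriv g y) (at y)" if "y \<in> I" for y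
    using gmul that by (auto intro!: derivative_eq_intros)
  have "good (\<lambda>y. deriv f y * g y + f y * deriv g y)" using gmul by (auto intro: good.gadd good.gmul)
  moreover have "\<forall>y\<in>I. deriv f y * g y + f y * deriv g y = deriv (\<lambda>y. f y * g y) y"
    using DERIV_imp_deriv[OF d] by simp
  ultimately have "good (deriv (\<lambda>y. f y * g y))" by (rule good.gcong)
  moreover have "\<And>y. y \<in> I \<Longrightarrow> deriv (\<lambda>y. f y * g y) y = deriv f y * g y + f y * deriv g y"
    using DERIV_imp_deriv[OF d] by simp
  ultimately show ?case using d by simp
next
  case (gcong f g)
  have e: "deriv f y = deriv g y" if "y \<in> I" for y
    by (rule deriv_cong_ev[OF ev_nhds[OF that]]) (use gcong in auto)
  have d: "(g has_field_derivative deriv g y) (at y)" if "y \<in> I" for y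
    using has_field_derivative_transform_within_open[of f "deriv f y" y I g] gcong that e openI by auto
  have "good (deriv g)" by (rule good.gcong[of "deriv f"]) (use gcong e in auto)
  then show ?case using d by auto
qed

lemma good_deriv: "good f \<Longrightarrow> good (deriv f)" using good_der by blast
lemma good_hasder: "good f \<Longrightarrow> y \<in> I \<Longrightarrow> (f has_field_derivative deriv f y) (at y)" using good_der by blast
lemma good_cont: "good f \<Longrightarrow> continuous_on I f"
  using good_hasder DERIV_isCont continuous_at_imp_continuous_on by blast

lemma good_alpha: "good \<alpha>" using galpha[of 0] by simp
lemma good_dalpha: "good (deriv \<alpha>)" using galpha[of 1] by simp
lemma good_ddalpha: "good (deriv (deriv \<alpha>))" using galpha[of 2] by (simp add: numeral_2_eq_2)
lemma good_a: "good a" using ga[of 0] by simp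
lemma good_da: "good (deriv a)" using ga[of 1] by simp

end


definition sl :: "bool \<Rightarrow> (real\<Rightarrow>real\<Rightarrow>real) \<Rightarrow> real \<Rightarrow> real \<Rightarrow> real \<Rightarrow> real" where
  "sl b f t x z = (if b then f z x else f t z)"
definition pt :: "bool \<Rightarrow> real \<Rightarrow> real \<Rightarrow> real" where "pt b t x = (if b then t else x)"
definition dd :: "bool \<Rightarrow> (real\<Rightarrow>real\<Rightarrow>real) \<Rightarrow> real \<Rightarrow> real \<Rightarrow> real" where
  "dd b f = (if b then dt f else dx f)"

lemma sl_True: "sl True f t x = (\<lambda>z. f z x)" and sl_False: "sl False f t x = f t"
  by (auto simp: sl_def fun_eq_iff)

lemma dd_eq: "dd b f t x = deriv (sl b f t x) (pt b t x)"
  by (cases b) (auto simp: dd_def dt_def dx_def sl_True sl_False pt_def)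
lemma pd_Cons': "pd (b#ws) w = dd b (pd ws w)" by (simp add: dd_def)
lemma sl_pt[simp]: "sl b f t x (pt b t x) = f t x" by (simp add: sl_def pt_def)
lemma dd_False: "dd False = dx" and dd_True: "dd True = dt" by (auto simp: dd_def fun_eq_iff)

definition sset :: "(real \<times> real) set \<Rightarrow> bool \<Rightarrow> real \<Rightarrow> real \<Rightarrow> real set" where
  "sset \<Omega> b t x = (if b then {z. (z, x) \<in> \<Omega>} else {z. (t, z) \<in> \<Omega>})"

lemma sset_open: "open \<Omega> \<Longrightarrow> open (sset \<Omega> b t x)"
  by (auto simp: sset_def open_slice_t open_slice_x)
lemma sset_pt: "(t, x) \<in> \<Omega> \<Longrightarrow> pt b t x \<in> sset \<Omega> b t x"
  by (auto simp: sset_def pt_def)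
lemma sset_eq: "(\<forall>(t, x)\<in>\<Omega>. f t x = g t x) \<Longrightarrow> z \<in> sset \<Omega> b t x \<Longrightarrow> sl b f t x z = sl b g t x z"
  by (auto simp: sset_def sl_def split: if_splits)

lemma cong_dd: assumes "open \<Omega>" "\<forall>(t, x)\<in>\<Omega>. f t x = g t x" "(t, x) \<in> \<Omega>"
  shows "dd b f t x = dd b g t x"
  unfolding dd_eq
proof (rule deriv_cong_ev)
  show "eventually (\<lambda>z. sl b f t x z = sl b g t x z) (nhds (pt b t x))"
    unfolding eventually_nhds
    by (rule exI[of _ "sset \<Omega> b t x"], intro conjI sset_open[OF assms(1)] sset_pt[OF assms(3)] ballI sset_eq[OF assms(2)])
qed simp

lemma cong_dx: "open \<Omega> \<Longrightarrow> \<forall>(t, x)\<in>\<Omega>. f t x = g t x \<Longrightarrow> (t, x) \<in> \<Omega> \<Longrightarrow> dx f t x = dx g t x"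
  using cong_dd[of \<Omega> f g t x False] by (simp add: dd_False)

lemma transfer_der: assumes "open \<Omega>" "\<forall>(t, x)\<in>\<Omega>. f t x = g t x" "(t, x) \<in> \<Omega>"
   "(sl b g t x has_field_derivative D) (at (pt b t x))"
  shows "(sl b f t x has_field_derivative D) (at (pt b t x))"
  by (rule has_field_derivative_transform_within_open[OF assms(4) sset_open[OF assms(1)] sset_pt[OF assms(3)]])
     (rule sset_eq[OF assms(2), symmetric])

fun dprod :: "bool \<Rightarrow> bool list list \<Rightarrow> bool list list list" where
  "dprod b [] = []"
| "dprod b (w # ws) = ((b # w) # ws) # map (Cons w) (dprod b ws)"

definition dterm :: "bool \<Rightarrow> (real \<Rightarrow> real) \<times> bool list list \<Rightarrow> ((real \<Rightarrow> real) \<times> bool list list) list" where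
  "dterm b = (\<lambda>(\<beta>, ws). (deriv \<beta>, [b] # ws) # map (\<lambda>ys. (\<beta>, ys)) (dprod b ws))"

definition Dl :: "bool \<Rightarrow> ((real \<Rightarrow> real) \<times> bool list list) list \<Rightarrow> ((real \<Rightarrow> real) \<times> bool list list) list" where
  "Dl b X = concat (map (dterm b) X)"

definition mulL :: "((real \<Rightarrow> real) \<times> 'w list) list \<Rightarrow> ((real \<Rightarrow> real) \<times> 'w list) list \<Rightarrow> ((real \<Rightarrow> real) \<times> 'w list) list" where
  "mulL X Y = concat (map (\<lambda>(\<beta>, ws). map (\<lambda>(\<gamma>, zs). (\<lambda>y. \<beta> y * \<gamma> y, ws @ zs)) Y) X)"

locale sm = coef +
  fixes \<Omega> :: "(real \<times> real) set" and v :: "real \<Rightarrow> real \<Rightarrow> real"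
  assumes openO: "open \<Omega>" and sv: "smooth2_on \<Omega> v" and vI: "\<forall>(t, x)\<in>\<Omega>. v t x \<in> I"
begin

definition ev :: "((real \<Rightarrow> real) \<times> bool list list) list \<Rightarrow> real \<Rightarrow> real \<Rightarrow> real" where
  "ev X t x = (\<Sum>(\<beta>, ws)\<leftarrow>X. \<beta> (v t x) * (\<Prod>w\<leftarrow>ws. pd w v t x))"

definition glist :: "((real \<Rightarrow> real) \<times> 'w list) list \<Rightarrow> bool" where
  "glist X \<longleftrightarrow> (\<forall>(\<beta>, ws)\<in>set X. good \<beta>)"

lemma ev_Nil[simp]: "ev [] t x = 0" by (simp add: ev_def)
lemma ev_Cons: "ev ((\<beta>, ws) # X) t x = \<beta> (v t x) * (\<Prod>w\<leftarrow>ws. pd w v t x) + ev X t x"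
  by (simp add: ev_def)
lemma ev_append: "ev (X @ Y) t x = ev X t x + ev Y t x" by (simp add: ev_def)
lemma ev_concat: "ev (concat Xs) t x = (\<Sum>X\<leftarrow>Xs. ev X t x)"
  by (induction Xs) (auto simp: ev_append)

lemma ev_mul: "ev (mulL X Y) t x = ev X t x * ev Y t x"
proof (induction X)
  case Nil then show ?case by (simp add: mulL_def)
next
  case (Cons p X)
  obtain \<beta> ws where p: "p = (\<beta>, ws)" by force
  have "ev (map (\<lambda>(\<gamma>, zs). (\<lambda>y. \<beta> y * \<gamma> y, ws @ zs)) Y) t x = \<beta> (v t x) * (\<Prod>w\<leftarrow>ws. pd w v t x) * ev Y t x"
    by (induction Y) (auto simp: ev_def algebra_simps)
  then show ?case using Cons by (simp add: mulL_def p ev_append ev_Cons algebra_simps)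
qed

lemma glist_append[simp]: "glist (X @ Y) \<longleftrightarrow> glist X \<and> glist Y" by (auto simp: glist_def)
lemma glist_mul: "glist X \<Longrightarrow> glist Y \<Longrightarrow> glist (mulL X Y)"
  by (auto simp: glist_def mulL_def intro!: gmul)
lemma glist_Dl: "glist X \<Longrightarrow> glist (Dl b X)"
  by (auto simp: glist_def Dl_def dterm_def good_deriv)

lemma vcont: "continuous_on \<Omega> (\<lambda>(t, x). pd ws v t x)" using sv by (simp add: smooth2_on_def)

lemma pd_der: "(t, x) \<in> \<Omega> \<Longrightarrow> (sl b (pd ws v) t x has_field_derivative pd (b # ws) v t x) (at (pt b t x))"
  using sv unfolding smooth2_on_def
  by (cases b) (auto simp: sl_True sl_False pt_def dt_def dx_def DERIV_deriv_iff_field_differentiable[symmetric])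

lemma prod_der:
  assumes p: "(t, x) \<in> \<Omega>"
  shows "((\<lambda>z. \<Prod>w\<leftarrow>ws. sl b (pd w v) t x z) has_field_derivative (\<Sum>ys\<leftarrow>dprod b ws. \<Prod>w\<leftarrow>ys. pd w v t x)) (at (pt b t x))"
proof (induction ws)
  case Nil then show ?case by simp
next
  case (Cons w ws)
  have "((\<lambda>z. sl b (pd w v) t x z * (\<Prod>w\<leftarrow>ws. sl b (pd w v) t x z)) has_field_derivative
     pd (b # w) v t x * (\<Prod>w\<leftarrow>ws. sl b (pd w v) t x (pt b t x)) +
     sl b (pd w v) t x (pt b t x) * (\<Sum>ys\<leftarrow>dprod b ws. \<Prod>w\<leftarrow>ys. pd w v t x)) (at (pt b t x))"
    by (rule DERIV_mult'[OF pd_der[OF p] Cons, THEN DERIV_cong]) (simp add: algebra_simps)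
  then show ?case by (simp add: o_def sum_list_const_mult)
qed

lemma chain_der:
  assumes p: "(t, x) \<in> \<Omega>" and g: "good \<beta>"
  shows "((\<lambda>z. \<beta> (sl b v t x z)) has_field_derivative deriv \<beta> (v t x) * pd [b] v t x) (at (pt b t x))"
proof -
  have "v t x \<in> I" using vI p by auto
  from good_hasder[OF g this] have "(\<beta> has_field_derivative deriv \<beta> (v t x)) (at (sl b v t x (pt b t x)))" by simp
  moreover have "(sl b v t x has_field_derivative pd [b] v t x) (at (pt b t x))"
    using pd_der[OF p, of b "[]"] by (simp only: pd.simps(1))
  ultimately show ?thesis by (rule DERIV_chain2)
qed

lemma sl_ev: "sl b (ev X) t x = (\<lambda>z. \<Sum>(\<beta>, ws)\<leftarrow>X. \<beta> (sl b v t x z) * (\<Prod>w\<leftarrow>ws. sl b (pd w v) t x z))"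
  by (cases b) (auto simp: sl_True sl_False ev_def fun_eq_iff)

lemma ev_der:
  assumes p: "(t, x) \<in> \<Omega>"
  shows "glist X \<Longrightarrow> (sl b (ev X) t x has_field_derivative ev (Dl b X) t x) (at (pt b t x))"
proof (induction X)
  case Nil then show ?case by (cases b) (simp_all add: sl_True sl_False Dl_def ev_def)
next
  case (Cons p X)
  obtain \<beta> ws where pp: "p = (\<beta>, ws)" by force
  have g: "good \<beta>" "glist X" using Cons.prems by (auto simp: glist_def pp)
  have IH: "((\<lambda>z. \<Sum>(\<beta>, ws)\<leftarrow>X. \<beta> (sl b v t x z) * (\<Prod>w\<leftarrow>ws. sl b (pd w v) t x z)) has_field_derivative ev (Dl b X) t x) (at (pt b t x))"
    using Cons.IH[OF g(2)] by (simp add: sl_ev)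
  have T: "((\<lambda>z. \<beta> (sl b v t x z) * (\<Prod>w\<leftarrow>ws. sl b (pd w v) t x z)) has_field_derivative
     deriv \<beta> (v t x) * pd [b] v t x * (\<Prod>w\<leftarrow>ws. sl b (pd w v) t x (pt b t x)) +
     \<beta> (sl b v t x (pt b t x)) * (\<Sum>ys\<leftarrow>dprod b ws. \<Prod>w\<leftarrow>ys. pd w v t x)) (at (pt b t x))"
    by (rule DERIV_mult'[OF chain_der[OF p g(1)] prod_der[OF p], THEN DERIV_cong]) (simp add: algebra_simps)
  have E: "ev (dterm b (\<beta>, ws)) t x = deriv \<beta> (v t x) * pd [b] v t x * (\<Prod>w\<leftarrow>ws. pd w v t x) +
     \<beta> (v t x) * (\<Sum>ys\<leftarrow>dprod b ws. \<Prod>w\<leftarrow>ys. pd w v t x)"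
  proof -
    have "ev (map (\<lambda>ys. (\<beta>, ys)) (dprod b ws)) t x = \<beta> (v t x) * (\<Sum>ys\<leftarrow>dprod b ws. \<Prod>w\<leftarrow>ys. pd w v t x)"
      by (induction "dprod b ws") (auto simp: ev_def sum_list_const_mult o_def)
    then show ?thesis by (simp add: dterm_def ev_Cons)
  qed
  have "Dl b (p # X) = dterm b (\<beta>, ws) @ Dl b X" by (simp add: Dl_def pp)
  then have "ev (Dl b (p # X)) t x = ev (dterm b (\<beta>, ws)) t x + ev (Dl b X) t x" by (simp add: ev_append)
  with DERIV_add[OF T IH] E show ?case by (simp add: sl_ev pp)
qed

definition R :: "(real \<Rightarrow> real \<Rightarrow> real) \<Rightarrow> bool" where
  "R f \<longleftrightarrow> (\<exists>X. glist X \<and> (\<forall>(t, x)\<in>\<Omega>. f t x = ev X t x))"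

lemma R_I: "glist X \<Longrightarrow> (\<And>t x. (t, x) \<in> \<Omega> \<Longrightarrow> f t x = ev X t x) \<Longrightarrow> R f"
  unfolding R_def by blast
lemma R_E: "R f \<Longrightarrow> (\<And>X. glist X \<Longrightarrow> (\<And>t x. (t, x) \<in> \<Omega> \<Longrightarrow> f t x = ev X t x) \<Longrightarrow> P) \<Longrightarrow> P"
  unfolding R_def by blast

lemma R_der: assumes "R f" "(t, x) \<in> \<Omega>"
  shows "(sl b f t x has_field_derivative dd b f t x) (at (pt b t x))"
proof -
  obtain X where X: "glist X" "\<forall>(t, x)\<in>\<Omega>. f t x = ev X t x" using assms(1) R_def by auto
  have "(sl b f t x has_field_derivative ev (Dl b X) t x) (at (pt b t x))"
    by (rule transfer_der[OF openO X(2) assms(2) ev_der[OF assms(2) X(1)]])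
  then show ?thesis by (simp add: dd_eq DERIV_imp_deriv)
qed

lemma R_dd: assumes "R f" shows "R (dd b f)"
proof -
  obtain X where X: "glist X" "\<forall>(t, x)\<in>\<Omega>. f t x = ev X t x" using assms(1) R_def by auto
  have "\<forall>(t, x)\<in>\<Omega>. dd b f t x = ev (Dl b X) t x"
  proof (clarify)
    fix t x assume p: "(t, x) \<in> \<Omega>"
    have "(sl b f t x has_field_derivative ev (Dl b X) t x) (at (pt b t x))"
      by (rule transfer_der[OF openO X(2) p ev_der[OF p X(1)]])
    then show "dd b f t x = ev (Dl b X) t x" by (simp add: dd_eq DERIV_imp_deriv)
  qed
  then show ?thesis using glist_Dl[OF X(1)] R_def by blast
qed

lemma R_dx: "R f \<Longrightarrow> R (dx f)" using R_dd[of f False] by (simp add: dd_False)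
lemma R_dt: "R f \<Longrightarrow> R (dt f)" using R_dd[of f True] by (simp add: dd_True)

lemma R_add: assumes "R f" "R g" shows "R (\<lambda>t x. f t x + g t x)"
proof -
  obtain X where X: "glist X" "\<And>t x. (t, x)\<in>\<Omega> \<Longrightarrow> f t x = ev X t x" using assms(1) R_E by metis
  obtain Y where Y: "glist Y" "\<And>t x. (t, x)\<in>\<Omega> \<Longrightarrow> g t x = ev Y t x" using assms(2) R_E by metis
  show ?thesis by (rule R_I[of "X @ Y"]) (use X Y in \<open>auto simp: ev_append\<close>)
qed

lemma R_mult: assumes "R f" "R g" shows "R (\<lambda>t x. f t x * g t x)"
proof -
  obtain X where X: "glist X" "\<And>t x. (t, x)\<in>\<Omega> \<Longrightarrow> f t x = ev X t x" using assms(1) R_E by metis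
  obtain Y where Y: "glist Y" "\<And>t x. (t, x)\<in>\<Omega> \<Longrightarrow> g t x = ev Y t x" using assms(2) R_E by metis
  show ?thesis by (rule R_I[of "mulL X Y"]) (use X Y in \<open>auto simp: ev_mul glist_mul\<close>)
qed

lemma R_comp: assumes "good \<beta>" shows "R (\<lambda>t x. \<beta> (v t x))"
  unfolding R_def by (rule exI[of _ "[(\<beta>, [])]"]) (use assms in \<open>auto simp: ev_def glist_def\<close>)

lemma R_const: "R (\<lambda>t x. c)" using R_comp[OF gconst[of c]] by simp

lemma R_v: "R v" using R_comp[OF gid] by simp

lemma R_cong: "R f \<Longrightarrow> \<forall>(t, x)\<in>\<Omega>. f t x = g t x \<Longrightarrow> R g"
  unfolding R_def by fastforce

lemma ev_cont: "glist X \<Longrightarrow> continuous_on \<Omega> (\<lambda>(t, x). ev X t x)"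
proof (induction X)
  case Nil then show ?case by (simp add: continuous_on_const)
next
  case (Cons p X)
  obtain \<beta> ws where pp: "p = (\<beta>, ws)" by force
  have g: "good \<beta>" "glist X" using Cons.prems by (auto simp: glist_def pp)
  have c1: "continuous_on \<Omega> (\<lambda>(t, x). \<beta> (v t x))"
  proof -
    have "continuous_on \<Omega> (\<lambda>q. \<beta> ((\<lambda>(t, x). v t x) q))"
      by (rule continuous_on_compose2[OF good_cont[OF g(1)] vcont[of "[]", simplified]]) (use vI in auto)
    then show ?thesis by (simp add: case_prod_beta')
  qed
  have c2: "continuous_on \<Omega> (\<lambda>(t, x). \<Prod>w\<leftarrow>ws. pd w v t x)"
  proof (induction ws)
    case Nil then show ?case by (simp add: continuous_on_const)
  next
    case (Cons w ws)
    have "continuous_on \<Omega> (\<lambda>q. (\<lambda>(t, x). pd w v t x) q * (\<lambda>(t, x). \<Prod>w\<leftarrow>ws. pd w v t x) q)"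
      by (rule continuous_on_mult[OF vcont Cons])
    then show ?case by (simp add: case_prod_beta')
  qed
  have "continuous_on \<Omega> (\<lambda>q. (\<lambda>(t, x). \<beta> (v t x)) q * (\<lambda>(t, x). \<Prod>w\<leftarrow>ws. pd w v t x) q + (\<lambda>(t, x). ev X t x) q)"
    by (intro continuous_on_add continuous_on_mult c1 c2 Cons.IH g(2))
  then show ?case by (simp add: case_prod_beta' ev_Cons pp)
qed

lemma R_cont: assumes "R f" shows "continuous_on \<Omega> (\<lambda>(t, x). f t x)"
proof -
  obtain X where X: "glist X" "\<forall>(t, x)\<in>\<Omega>. f t x = ev X t x" using assms(1) R_def by auto
  show ?thesis by (rule continuous_on_eq[OF ev_cont[OF X(1)]]) (use X(2) in auto)
qed

lemma R_pd: "R f \<Longrightarrow> R (pd ws f)"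
  by (induction ws) (auto simp del: pd.simps(2) simp add: pd_Cons' intro: R_dd)

lemma R_smooth2: assumes "R f" shows "smooth2_on \<Omega> f"
  unfolding smooth2_on_def
proof (intro allI conjI ballI)
  fix ws
  show "continuous_on \<Omega> (\<lambda>(t, x). pd ws f t x)" using R_cont[OF R_pd[OF assms]] .
  fix q assume q: "q \<in> \<Omega>"
  obtain t x where tx: "q = (t, x)" by force
  have r: "R (pd ws f)" using R_pd[OF assms] .
  have "(\<lambda>y. pd ws f t y) field_differentiable (at x)"
    using R_der[OF r, of t x False] q tx by (auto simp: sl_False pt_def field_differentiable_def)
  moreover have "(\<lambda>s. pd ws f s x) field_differentiable (at t)"
    using R_der[OF r, of t x True] q tx by (auto simp: sl_True pt_def field_differentiable_def)
  ultimately show "case q of (t, x) \<Rightarrow> (\<lambda>y. pd ws f t y) field_differentiable at x \<and> (\<lambda>s. pd ws f s x) field_differentiable at t"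
    by (simp add: tx)
qed

lemma R_clairaut: "R f \<Longrightarrow> (t, x) \<in> \<Omega> \<Longrightarrow> dt (dx f) t x = dx (dt f) t x"
  using clairaut[OF openO R_smooth2] by blast

end


definition cv :: "((real \<Rightarrow> real) \<times> nat list) list \<Rightarrow> ((real \<Rightarrow> real) \<times> bool list list) list" where
  "cv X = map (\<lambda>(\<beta>, gs). (\<beta>, map (\<lambda>g. replicate g False) gs)) X"

fun dprodM :: "nat list \<Rightarrow> nat list list" where
  "dprodM [] = []"
| "dprodM (g # gs) = (Suc g # gs) # map (Cons g) (dprodM gs)"

definition dtermM :: "(real \<Rightarrow> real) \<times> nat list \<Rightarrow> ((real \<Rightarrow> real) \<times> nat list) list" where
  "dtermM = (\<lambda>(\<beta>, gs). (deriv \<beta>, 1 # gs) # map (\<lambda>ys. (\<beta>, ys)) (dprodM gs))"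

definition DxM :: "((real \<Rightarrow> real) \<times> nat list) list \<Rightarrow> ((real \<Rightarrow> real) \<times> nat list) list" where
  "DxM X = concat (map dtermM X)"

lemma dprodM_cv: "map (map (\<lambda>g. replicate g False)) (dprodM gs) = dprod False (map (\<lambda>g. replicate g False) gs)"
proof (induction gs)
  case Nil then show ?case by simp
next
  case (Cons a gs)
  have "map (map (\<lambda>g. replicate g False)) (map (Cons a) (dprodM gs))
        = map (Cons (replicate a False)) (map (map (\<lambda>g. replicate g False)) (dprodM gs))" by simp
  then show ?case using Cons by simp
qed

lemma cv_DxM: "cv (DxM X) = Dl False (cv X)"
proof (induction X)
  case Nil then show ?case by (simp add: cv_def DxM_def Dl_def)
next
  case (Cons p X)
  obtain \<beta> gs where p: "p = (\<beta>, gs)" by force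
  have "cv (dtermM (\<beta>, gs)) = dterm False (\<beta>, map (\<lambda>g. replicate g False) gs)"
    by (simp add: cv_def dtermM_def dterm_def dprodM_cv[symmetric])
  then show ?case using Cons by (simp add: DxM_def Dl_def p cv_def)
qed

lemma cv_mul: "cv (mulL X Y) = mulL (cv X) (cv Y)"
  by (simp add: cv_def mulL_def map_concat o_def case_prod_beta')

lemma cv_append: "cv (X @ Y) = cv X @ cv Y" by (simp add: cv_def)

lemma pd_rep: "pd (replicate g False) w = (dx ^^ g) w"
  by (induction g) auto

definition hom :: "((real \<Rightarrow> real) \<times> nat list) list \<Rightarrow> nat \<Rightarrow> bool" where
  "hom X n \<longleftrightarrow> (\<forall>p\<in>set X. sum_list (snd p) = n)"
definition ordle :: "((real \<Rightarrow> real) \<times> nat list) list \<Rightarrow> nat \<Rightarrow> bool" where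
  "ordle X m \<longleftrightarrow> (\<forall>p\<in>set X. \<forall>g\<in>set (snd p). 1 \<le> g \<and> g \<le> m)"

lemma hom_app: "hom X n \<Longrightarrow> hom Y n \<Longrightarrow> hom (X @ Y) n" by (auto simp: hom_def)
lemma set_mulL: "p \<in> set (mulL X Y) \<Longrightarrow> \<exists>\<beta> ws \<gamma> zs. (\<beta>, ws) \<in> set X \<and> (\<gamma>, zs) \<in> set Y \<and> p = (\<lambda>y. \<beta> y * \<gamma> y, ws @ zs)"
  by (auto simp: mulL_def)
lemma hom_mul: assumes "hom X n" "hom Y m" shows "hom (mulL X Y) (n + m)"
  unfolding hom_def
proof
  fix p assume "p \<in> set (mulL X Y)"
  then obtain \<beta> ws \<gamma> zs where p: "(\<beta>, ws) \<in> set X" "(\<gamma>, zs) \<in> set Y" "p = (\<lambda>y. \<beta> y * \<gamma> y, ws @ zs)"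
    using set_mulL by blast
  have "sum_list (snd (\<beta>, ws)) = n" using assms(1) p(1) unfolding hom_def by blast
  moreover have "sum_list (snd (\<gamma>, zs)) = m" using assms(2) p(2) unfolding hom_def by blast
  ultimately show "sum_list (snd p) = n + m" using p(3) by simp
qed
lemma hom_dprodM: "ys \<in> set (dprodM gs) \<Longrightarrow> sum_list ys = Suc (sum_list gs)"
  by (induction gs arbitrary: ys) auto
lemma hom_DxM: "hom X n \<Longrightarrow> hom (DxM X) (Suc n)"
  by (auto simp: hom_def DxM_def dtermM_def hom_dprodM)
lemma hom_single: "hom [(\<beta>, gs)] (sum_list gs)" by (simp add: hom_def)

lemma ordle_app: "ordle X n \<Longrightarrow> ordle Y n \<Longrightarrow> ordle (X @ Y) n" by (auto simp: ordle_def)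
lemma ordle_mul: assumes "ordle X n" "ordle Y n" shows "ordle (mulL X Y) n"
  unfolding ordle_def
proof
  fix p assume "p \<in> set (mulL X Y)"
  then obtain \<beta> ws \<gamma> zs where p: "(\<beta>, ws) \<in> set X" "(\<gamma>, zs) \<in> set Y" "p = (\<lambda>y. \<beta> y * \<gamma> y, ws @ zs)"
    using set_mulL by blast
  have "\<forall>g\<in>set (snd (\<beta>, ws)). 1 \<le> g \<and> g \<le> n" using assms(1) p(1) unfolding ordle_def by blast
  moreover have "\<forall>g\<in>set (snd (\<gamma>, zs)). 1 \<le> g \<and> g \<le> n" using assms(2) p(2) unfolding ordle_def by blast
  ultimately show "\<forall>g\<in>set (snd p). 1 \<le> g \<and> g \<le> n" using p(3) by auto
qed
lemma ordle_mono: "ordle X n \<Longrightarrow> n \<le> m \<Longrightarrow> ordle X m" by (fastforce simp: ordle_def)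
lemma ord_dprodM: "ys \<in> set (dprodM gs) \<Longrightarrow> \<forall>g\<in>set gs. 1 \<le> g \<and> g \<le> m \<Longrightarrow> \<forall>g\<in>set ys. 1 \<le> g \<and> g \<le> Suc m"
  by (induction gs arbitrary: ys) (auto simp: le_SucI)
lemma ordle_DxM: "ordle X m \<Longrightarrow> ordle (DxM X) (Suc m)"
  unfolding ordle_def DxM_def dtermM_def
  by (fastforce dest: ord_dprodM simp: le_SucI split: prod.splits)

fun V :: "(real \<Rightarrow> real) \<Rightarrow> nat \<Rightarrow> ((real \<Rightarrow> real) \<times> nat list) list" where
  "V \<alpha> 0 = [(\<lambda>y. y, [])]"
| "V \<alpha> (Suc j) = mulL [(\<alpha>, [])] (DxM (V \<alpha> j))"

lemma hom_V: "hom (V \<alpha> j) j"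
  by (induction j) (auto simp: hom_def mulL_def DxM_def dtermM_def hom_dprodM)
lemma ordle_V: "ordle (V \<alpha> j) j"
proof (induction j)
  case 0 then show ?case by (simp add: ordle_def)
next
  case (Suc j)
  have "ordle [(\<alpha>, [])] (Suc j)" by (simp add: ordle_def)
  then show ?case using ordle_mul ordle_DxM[OF Suc] by simp
qed

lemma vk_Suc: "vk \<alpha> v (Suc k) = (\<lambda>t x. \<alpha> (v t x) * dx (vk \<alpha> v k) t x)"
  by (simp add: vk_def)
lemma vk_0: "vk \<alpha> v 0 = v" by (simp add: vk_def)

context sm
begin

lemma monsum_ev: "monsum X v t x = ev (cv X) t x"
  by (simp add: monsum_def ev_def cv_def pd_rep o_def case_prod_beta')

lemma glist_cv: "glist X \<Longrightarrow> glist (cv X)" by (auto simp: glist_def cv_def)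
lemma glist_DxM: "glist X \<Longrightarrow> glist (DxM X)"
  by (auto simp: glist_def DxM_def dtermM_def good_deriv)

lemma R_monsum: "glist X \<Longrightarrow> R (monsum X v)"
  by (rule R_I[OF glist_cv]) (simp_all add: monsum_ev)

lemma dx_monsum: assumes "glist X" "(t, x) \<in> \<Omega>"
  shows "dx (monsum X v) t x = monsum (DxM X) v t x"
proof -
  have e: "monsum X v = ev (cv X)" by (auto simp: fun_eq_iff monsum_ev)
  have "(sl False (ev (cv X)) t x has_field_derivative ev (Dl False (cv X)) t x) (at (pt False t x))"
    by (rule ev_der[OF assms(2) glist_cv[OF assms(1)]])
  then have "dd False (ev (cv X)) t x = ev (Dl False (cv X)) t x" by (simp add: dd_eq DERIV_imp_deriv)
  then show ?thesis by (simp add: e dd_False monsum_ev cv_DxM)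
qed

lemma monsum_app: "monsum (X @ Y) v t x = monsum X v t x + monsum Y v t x"
  by (simp add: monsum_ev cv_append ev_append)
lemma monsum_mul: "monsum (mulL X Y) v t x = monsum X v t x * monsum Y v t x"
  by (simp add: monsum_ev cv_mul ev_mul)
lemma monsum_single: "monsum [(\<beta>, [])] v t x = \<beta> (v t x)"
  by (simp add: monsum_def)
lemma monsum_u: "monsum [(\<lambda>y. c, [g])] v t x = c * (dx ^^ g) v t x"
  by (simp add: monsum_def)

lemma glist_V: "glist (V \<alpha> j)"
proof (induction j)
  case 0 then show ?case by (simp add: glist_def gid)
next
  case (Suc j)
  have "glist [(\<alpha>, [])]" by (simp add: glist_def good_alpha)
  then show ?case using glist_mul glist_DxM[OF Suc] by simp
qed

lemma vk_V: "(t, x) \<in> \<Omega> \<Longrightarrow> vk \<alpha> v j t x = monsum (V \<alpha> j) v t x"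
proof (induction j arbitrary: t x)
  case 0 then show ?case by (simp add: vk_0 monsum_def)
next
  case (Suc j)
  have "dx (vk \<alpha> v j) t x = dx (monsum (V \<alpha> j) v) t x"
    by (rule cong_dx[OF openO _ Suc.prems]) (use Suc.IH in auto)
  also have "\<dots> = monsum (DxM (V \<alpha> j)) v t x" by (rule dx_monsum[OF glist_V Suc.prems])
  finally show ?case by (simp add: vk_Suc monsum_mul monsum_single)
qed

lemma R_vk: "R (vk \<alpha> v j)"
  by (rule R_cong[OF R_monsum[OF glist_V]]) (use vk_V in auto)

lemma sl_add: "sl b (\<lambda>t x. f t x + g t x) t x = (\<lambda>z. sl b f t x z + sl b g t x z)"
  by (cases b) (auto simp: sl_True sl_False)
lemma sl_mul: "sl b (\<lambda>t x. f t x * g t x) t x = (\<lambda>z. sl b f t x z * sl b g t x z)"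
  by (cases b) (auto simp: sl_True sl_False)
lemma sl_comp: "sl b (\<lambda>t x. \<beta> (v t x)) t x = (\<lambda>z. \<beta> (sl b v t x z))"
  by (cases b) (auto simp: sl_True sl_False)

lemma dd_add: assumes "R f" "R g" "(t, x) \<in> \<Omega>"
  shows "dd b (\<lambda>t x. f t x + g t x) t x = dd b f t x + dd b g t x"
proof -
  have "((\<lambda>z. sl b f t x z + sl b g t x z) has_field_derivative dd b f t x + dd b g t x) (at (pt b t x))"
    by (rule DERIV_add[OF R_der[OF assms(1,3)] R_der[OF assms(2,3)]])
  then show ?thesis by (simp add: dd_eq[of b "\<lambda>t x. f t x + g t x"] sl_add DERIV_imp_deriv)
qed

lemma dd_mul: assumes "R f" "R g" "(t, x) \<in> \<Omega>"
  shows "dd b (\<lambda>t x. f t x * g t x) t x = dd b f t x * g t x + f t x * dd b g t x"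
proof -
  have "((\<lambda>z. sl b f t x z * sl b g t x z) has_field_derivative sl b f t x (pt b t x) * dd b g t x + dd b f t x * sl b g t x (pt b t x)) (at (pt b t x))"
    by (rule DERIV_mult'[OF R_der[OF assms(1,3)] R_der[OF assms(2,3)]])
  then show ?thesis by (simp add: dd_eq[of b "\<lambda>t x. f t x * g t x"] sl_mul DERIV_imp_deriv algebra_simps)
qed

lemma dd_comp: assumes "good \<beta>" "(t, x) \<in> \<Omega>"
  shows "dd b (\<lambda>t x. \<beta> (v t x)) t x = deriv \<beta> (v t x) * dd b v t x"
proof -
  have e: "pd [b] v = dd b v" by (simp only: pd_Cons' pd.simps(1))
  have "((\<lambda>z. \<beta> (sl b v t x z)) has_field_derivative deriv \<beta> (v t x) * dd b v t x) (at (pt b t x))"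
    using chain_der[OF assms(2,1), of b] unfolding e .
  then have "deriv (\<lambda>z. \<beta> (sl b v t x z)) (pt b t x) = deriv \<beta> (v t x) * dd b v t x" by (rule DERIV_imp_deriv)
  then show ?thesis by (simp only: dd_eq[of b "\<lambda>t x. \<beta> (v t x)"] sl_comp)
qed

lemmas dx_add = dd_add[of _ _ _ _ False, unfolded dd_False]
lemmas dx_mul = dd_mul[of _ _ _ _ False, unfolded dd_False]
lemmas dx_comp = dd_comp[of _ _ _ False, unfolded dd_False]
lemmas dt_add = dd_add[of _ _ _ _ True, unfolded dd_True]
lemmas dt_mul = dd_mul[of _ _ _ _ True, unfolded dd_True]
lemmas dt_comp = dd_comp[of _ _ _ True, unfolded dd_True]

lemmas Rintros = R_add R_mult R_comp R_const R_v R_dx R_dt R_vk R_monsum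

end


context sm begin

definition Dop :: "(real \<Rightarrow> real \<Rightarrow> real) \<Rightarrow> real \<Rightarrow> real \<Rightarrow> real" where
  "Dop w = (\<lambda>t x. \<alpha> (v t x) * dx w t x)"

lemma Lop_eq: "Lop \<alpha> a v w = (\<lambda>t x. dt w t x + a (v t x) * dx w t x + dx (Dop (Dop w)) t x)"
  by (simp add: Lop_def Dop_def)

lemma R_Dop: "R w \<Longrightarrow> R (Dop w)"
  unfolding Dop_def by (intro R_mult R_comp good_alpha R_dx)

lemma R_Lop: "R w \<Longrightarrow> R (Lop \<alpha> a v w)"
  unfolding Lop_eq by (intro R_add R_mult R_comp good_a R_dx R_dt R_Dop)

lemma vk_D: "vk \<alpha> v (Suc k) = Dop (vk \<alpha> v k)" by (simp add: vk_Suc Dop_def)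
lemma vk2: "vk \<alpha> v 2 = Dop (Dop v)" by (simp add: vk_def Dop_def numeral_2_eq_2)
lemma vk1: "vk \<alpha> v 1 = Dop v" by (simp add: vk_def Dop_def)

lemma dx_Dop: "R w \<Longrightarrow> (t, x) \<in> \<Omega> \<Longrightarrow> dx (Dop w) t x = deriv \<alpha> (v t x) * dx v t x * dx w t x + \<alpha> (v t x) * dx (dx w) t x"
  unfolding Dop_def
  by (simp add: dx_mul[OF R_comp[OF good_alpha] R_dx] dx_comp[OF good_alpha])

lemma dt_Dop: "R w \<Longrightarrow> (t, x) \<in> \<Omega> \<Longrightarrow> dt (Dop w) t x = deriv \<alpha> (v t x) * dt v t x * dx w t x + \<alpha> (v t x) * dt (dx w) t x"
  unfolding Dop_def
  by (simp add: dt_mul[OF R_comp[OF good_alpha] R_dx] dt_comp[OF good_alpha])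

end

locale sol = sm +
  assumes pde: "\<forall>(t, x)\<in>\<Omega>. Lop \<alpha> a v v t x = 0"
begin

lemma comm: assumes w: "R w" and p: "(t, x) \<in> \<Omega>"
  shows "Lop \<alpha> a v (Dop w) t x = \<alpha> (v t x) * dx (Lop \<alpha> a v w) t x
     - deriv a (v t x) * \<alpha> (v t x) * dx v t x * dx w t x
     - deriv \<alpha> (v t x) * dx (vk \<alpha> v 2) t x * dx w t x
     + deriv \<alpha> (v t x) * dx v t x * dx (Dop (Dop w)) t x"
proof -
  have RD: "R (Dop w)" "R (Dop (Dop w))" "R (Dop (Dop (Dop w)))" using w by (auto intro: R_Dop)
  have e1: "dt (Dop w) t x = deriv \<alpha> (v t x) * dt v t x * dx w t x + \<alpha> (v t x) * dx (dt w) t x"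
    using dt_Dop[OF w p] R_clairaut[OF w p] by simp
  have e3: "dx (Dop w) t x = deriv \<alpha> (v t x) * dx v t x * dx w t x + \<alpha> (v t x) * dx (dx w) t x"
    by (rule dx_Dop[OF w p])
  have e4: "dx (Dop (Dop (Dop w))) t x = deriv \<alpha> (v t x) * dx v t x * dx (Dop (Dop w)) t x + \<alpha> (v t x) * dx (dx (Dop (Dop w))) t x"
    by (rule dx_Dop[OF RD(2) p])
  have e6: "dx (\<lambda>t x. a (v t x) * dx w t x) t x = deriv a (v t x) * dx v t x * dx w t x + a (v t x) * dx (dx w) t x"
    by (simp add: dx_mul[OF R_comp[OF good_a] R_dx[OF w] p] dx_comp[OF good_a p])
  have e5: "dx (Lop \<alpha> a v w) t x = dx (dt w) t x + dx (\<lambda>t x. a (v t x) * dx w t x) t x + dx (dx (Dop (Dop w))) t x"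
    unfolding Lop_eq
    by (simp add: dx_add[OF R_add[OF R_dt[OF w] R_mult[OF R_comp[OF good_a] R_dx[OF w]]] R_dx[OF RD(2)] p]
                  dx_add[OF R_dt[OF w] R_mult[OF R_comp[OF good_a] R_dx[OF w]] p])
  have e7: "dt v t x + a (v t x) * dx v t x + dx (vk \<alpha> v 2) t x = 0"
  proof -
    have "Lop \<alpha> a v v t x = 0" using pde p by blast
    then show ?thesis by (simp add: Lop_eq vk2)
  qed
  have L: "Lop \<alpha> a v (Dop w) t x = dt (Dop w) t x + a (v t x) * dx (Dop w) t x + dx (Dop (Dop (Dop w))) t x"
    by (simp add: Lop_eq)
  have e7': "dt v t x = - a (v t x) * dx v t x - dx (vk \<alpha> v 2) t x" using e7 by linarith
  show ?thesis unfolding L e1 e3 e4 e5 e6 e7' by (simp add: algebra_simps)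
qed

end


context coef begin

definition A2 :: "real \<Rightarrow> (real \<Rightarrow> real) \<Rightarrow> real \<Rightarrow> real" where
  "A2 c A = (\<lambda>y. A y + (c * (deriv (deriv \<alpha>) y * \<alpha> y) + (1 - 2 * c) * (deriv \<alpha> y * deriv \<alpha> y)) * (inverse (\<alpha> y) * inverse (\<alpha> y)))"
definition B2 :: "real \<Rightarrow> (real \<Rightarrow> real) \<Rightarrow> real \<Rightarrow> real" where
  "B2 c B = (\<lambda>y. B y + c * (deriv \<alpha> y * inverse (\<alpha> y)))"

lemma good_A2: "good A \<Longrightarrow> good (A2 c A)"
  unfolding A2_def by (intro gadd gmul gconst good_ddalpha good_alpha good_dalpha ginv)
lemma good_B2: "good B \<Longrightarrow> good (B2 c B)"
  unfolding B2_def by (intro gadd gmul gconst good_dalpha ginv)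

end

context sm begin

definition rho :: "real \<Rightarrow> (real \<Rightarrow> real) \<Rightarrow> (real \<Rightarrow> real) \<Rightarrow> real \<Rightarrow> real \<Rightarrow> real" where
  "rho c A B t x = \<alpha> (v t x) * (deriv A (v t x) * dx v t x * (vk \<alpha> v 1 t x)\<^sup>2 + 2 * A (v t x) * vk \<alpha> v 1 t x * dx (vk \<alpha> v 1) t x
        + deriv B (v t x) * dx v t x * vk \<alpha> v 2 t x + B (v t x) * dx (vk \<alpha> v 2) t x)
     - deriv a (v t x) * \<alpha> (v t x) * dx v t x - deriv \<alpha> (v t x) * dx (vk \<alpha> v 2) t x
     + (deriv \<alpha> (v t x))^3 * (dx v t x)^3
     - c * \<alpha> (v t x) * deriv \<alpha> (v t x) * dx v t x * (deriv (deriv \<alpha>) (v t x) * (dx v t x)\<^sup>2 + deriv \<alpha> (v t x) * dx (dx v) t x)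
     - (A2 c A (v t x) * (vk \<alpha> v 1 t x)\<^sup>2 + B2 c B (v t x) * vk \<alpha> v 2 t x) * deriv \<alpha> (v t x) * dx v t x"

lemma dx_const: "dx (\<lambda>t x. c) t x = 0" by (simp add: dx_def)

end

context sol begin

lemma step:
  assumes gA: "good A" and gB: "good B" and RM: "R M"
  and IH: "\<forall>(t, x)\<in>\<Omega>. Lop \<alpha> a v (vk \<alpha> v k) t x = c * deriv \<alpha> (v t x) * vk \<alpha> v 1 t x * dx (dx (vk \<alpha> v k)) t x
      + (A (v t x) * (vk \<alpha> v 1 t x)\<^sup>2 + B (v t x) * vk \<alpha> v 2 t x) * dx (vk \<alpha> v k) t x + M t x"
  and p: "(t, x) \<in> \<Omega>"
  shows "Lop \<alpha> a v (vk \<alpha> v (Suc k)) t x = (c + 1) * deriv \<alpha> (v t x) * vk \<alpha> v 1 t x * dx (dx (vk \<alpha> v (Suc k))) t x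
      + (A2 c A (v t x) * (vk \<alpha> v 1 t x)\<^sup>2 + B2 c B (v t x) * vk \<alpha> v 2 t x) * dx (vk \<alpha> v (Suc k)) t x
      + (\<alpha> (v t x) * dx M t x + rho c A B t x * dx (vk \<alpha> v k) t x)"
proof -
  define w where "w = vk \<alpha> v k"
  have Rw: "R w" by (simp add: w_def R_vk)
  define E1 where "E1 = (\<lambda>t x. c * deriv \<alpha> (v t x) * vk \<alpha> v 1 t x)"
  define E2 where "E2 = (\<lambda>t x. A (v t x) * (vk \<alpha> v 1 t x * vk \<alpha> v 1 t x) + B (v t x) * vk \<alpha> v 2 t x)"
  have RE1: "R E1" unfolding E1_def by (intro R_mult R_const R_comp good_dalpha R_vk)
  have RE2: "R E2" unfolding E2_def by (intro R_add R_mult R_comp gA gB R_vk)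
  have IH': "\<forall>(t, x)\<in>\<Omega>. Lop \<alpha> a v w t x = (\<lambda>t x. E1 t x * dx (dx w) t x + E2 t x * dx w t x + M t x) t x"
    using IH by (auto simp: E1_def E2_def w_def power2_eq_square)
  have dL: "dx (Lop \<alpha> a v w) t x = dx (\<lambda>t x. E1 t x * dx (dx w) t x + E2 t x * dx w t x + M t x) t x"
    by (rule cong_dx[OF openO IH' p])
  also have "\<dots> = dx E1 t x * dx (dx w) t x + E1 t x * dx (dx (dx w)) t x + (dx E2 t x * dx w t x + E2 t x * dx (dx w) t x) + dx M t x"
    by (simp add: dx_add dx_mul R_add R_mult RE1 RE2 RM R_dx Rw p)
  finally have dL: "dx (Lop \<alpha> a v w) t x = dx E1 t x * dx (dx w) t x + E1 t x * dx (dx (dx w)) t x + (dx E2 t x * dx w t x + E2 t x * dx (dx w) t x) + dx M t x" .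
  have dE1: "dx E1 t x = c * (deriv (deriv \<alpha>) (v t x) * dx v t x) * vk \<alpha> v 1 t x + c * deriv \<alpha> (v t x) * dx (vk \<alpha> v 1) t x"
    unfolding E1_def
    by (simp add: dx_mul dx_comp dx_const R_mult R_const R_comp good_dalpha good_ddalpha R_vk p)
  have dE2: "dx E2 t x = deriv A (v t x) * dx v t x * (vk \<alpha> v 1 t x * vk \<alpha> v 1 t x) + A (v t x) * (dx (vk \<alpha> v 1) t x * vk \<alpha> v 1 t x + vk \<alpha> v 1 t x * dx (vk \<alpha> v 1) t x)
     + (deriv B (v t x) * dx v t x * vk \<alpha> v 2 t x + B (v t x) * dx (vk \<alpha> v 2) t x)"
    unfolding E2_def
    by (simp add: dx_add dx_mul dx_comp R_add R_mult R_comp gA gB R_vk p)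
  have Y1all: "\<forall>(t, x)\<in>\<Omega>. dx (vk \<alpha> v (Suc k)) t x = (\<lambda>t x. deriv \<alpha> (v t x) * dx v t x * dx w t x + \<alpha> (v t x) * dx (dx w) t x) t x"
    using dx_Dop[OF Rw] by (auto simp: vk_D w_def)
  have Y1: "dx (vk \<alpha> v (Suc k)) t x = deriv \<alpha> (v t x) * dx v t x * dx w t x + \<alpha> (v t x) * dx (dx w) t x"
    using Y1all p by auto
  have Y2: "dx (dx (vk \<alpha> v (Suc k))) t x = (deriv (deriv \<alpha>) (v t x) * dx v t x * dx v t x + deriv \<alpha> (v t x) * dx (dx v) t x) * dx w t x
       + deriv \<alpha> (v t x) * dx v t x * dx (dx w) t x + (deriv \<alpha> (v t x) * dx v t x * dx (dx w) t x + \<alpha> (v t x) * dx (dx (dx w)) t x)"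
  proof -
    have "dx (dx (vk \<alpha> v (Suc k))) t x = dx (\<lambda>t x. deriv \<alpha> (v t x) * dx v t x * dx w t x + \<alpha> (v t x) * dx (dx w) t x) t x"
      by (rule cong_dx[OF openO Y1all p])
    also have "\<dots> = (deriv (deriv \<alpha>) (v t x) * dx v t x * dx v t x + deriv \<alpha> (v t x) * dx (dx v) t x) * dx w t x
       + deriv \<alpha> (v t x) * dx v t x * dx (dx w) t x + (deriv \<alpha> (v t x) * dx v t x * dx (dx w) t x + \<alpha> (v t x) * dx (dx (dx w)) t x)"
      by (simp add: dx_add dx_mul dx_comp R_add R_mult R_comp good_dalpha good_ddalpha good_alpha R_dx R_v Rw p algebra_simps)
    finally show ?thesis .
  qed
  have Y3: "dx (Dop (Dop w)) t x = deriv \<alpha> (v t x) * dx v t x * dx (vk \<alpha> v (Suc k)) t x + \<alpha> (v t x) * dx (dx (vk \<alpha> v (Suc k))) t x"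
    using dx_Dop[OF R_vk p, of "Suc k"] by (simp add: vk_D w_def)
  have W1: "vk \<alpha> v 1 t x = \<alpha> (v t x) * dx v t x" unfolding vk1 Dop_def by simp
  have dW1: "dx (vk \<alpha> v 1) t x = deriv \<alpha> (v t x) * dx v t x * dx v t x + \<alpha> (v t x) * dx (dx v) t x"
    unfolding vk1 by (rule dx_Dop[OF R_v p])
  have W2: "vk \<alpha> v 2 t x = \<alpha> (v t x) * dx (vk \<alpha> v 1) t x" by (simp add: vk_Suc numeral_2_eq_2)
  have C: "Lop \<alpha> a v (vk \<alpha> v (Suc k)) t x = \<alpha> (v t x) * dx (Lop \<alpha> a v w) t x
     - deriv a (v t x) * \<alpha> (v t x) * dx v t x * dx w t x
     - deriv \<alpha> (v t x) * dx (vk \<alpha> v 2) t x * dx w t x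
     + deriv \<alpha> (v t x) * dx v t x * dx (Dop (Dop w)) t x"
    unfolding vk_D w_def[symmetric] by (rule comm[OF Rw p])
  have anz: "\<alpha> (v t x) \<noteq> 0" using apos vI p by fastforce
  show ?thesis
    unfolding C dL dE1 dE2 Y3 Y2 Y1 rho_def A2_def B2_def w_def[symmetric]
    unfolding W2 dW1 W1 E1_def E2_def
    using anz by (simp add: field_simps power2_eq_square power3_eq_cube)
qed

end


definition K :: "(real \<Rightarrow> real) \<Rightarrow> ((real \<Rightarrow> real) \<times> nat list) list" where
  "K \<beta> = [(\<beta>, [])]"
definition U :: "nat \<Rightarrow> ((real \<Rightarrow> real) \<times> nat list) list" where
  "U g = [(\<lambda>y. 1, [g])]"

context coef begin

definition T1 :: "((real \<Rightarrow> real) \<times> nat list) list" where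
  "T1 = [(\<lambda>y. - (deriv a y * \<alpha> y), [1, 1])]"

definition Rho1 :: "((real \<Rightarrow> real) \<times> nat list) list" where
  "Rho1 = mulL (K (\<lambda>y. - (deriv a y * \<alpha> y))) (U 1)"

definition Rho3 :: "real \<Rightarrow> (real \<Rightarrow> real) \<Rightarrow> (real \<Rightarrow> real) \<Rightarrow> ((real \<Rightarrow> real) \<times> nat list) list" where
  "Rho3 c A B =
     mulL (K \<alpha>) (mulL (K (deriv A)) (mulL (U 1) (mulL (V \<alpha> 1) (V \<alpha> 1)))
                 @ mulL (K (\<lambda>y. 2 * A y)) (mulL (V \<alpha> 1) (DxM (V \<alpha> 1)))
                 @ mulL (K (deriv B)) (mulL (U 1) (V \<alpha> 2))
                 @ mulL (K B) (DxM (V \<alpha> 2)))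
     @ mulL (K (\<lambda>y. - deriv \<alpha> y)) (DxM (V \<alpha> 2))
     @ mulL (K (\<lambda>y. deriv \<alpha> y * deriv \<alpha> y * deriv \<alpha> y)) (mulL (U 1) (mulL (U 1) (U 1)))
     @ mulL (K (\<lambda>y. - (c * \<alpha> y * deriv \<alpha> y))) (mulL (U 1) (mulL (K (deriv (deriv \<alpha>))) (mulL (U 1) (U 1)) @ mulL (K (deriv \<alpha>)) (U 2)))
     @ mulL (K (\<lambda>y. - deriv \<alpha> y)) (mulL (mulL (K (A2 c A)) (mulL (V \<alpha> 1) (V \<alpha> 1)) @ mulL (K (B2 c B)) (V \<alpha> 2)) (U 1))"

end

context sm begin

lemma monsum_K: "monsum (K \<beta>) v t x = \<beta> (v t x)" by (simp add: K_def monsum_def)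
lemma monsum_U: "monsum (U g) v t x = (dx ^^ g) v t x" by (simp add: U_def monsum_def)

lemma dx_vk_monsum: "(t, x) \<in> \<Omega> \<Longrightarrow> dx (vk \<alpha> v j) t x = monsum (DxM (V \<alpha> j)) v t x"
proof -
  assume p: "(t, x) \<in> \<Omega>"
  have "dx (vk \<alpha> v j) t x = dx (monsum (V \<alpha> j) v) t x"
    by (rule cong_dx[OF openO _ p]) (use vk_V in auto)
  also have "\<dots> = monsum (DxM (V \<alpha> j)) v t x" by (rule dx_monsum[OF glist_V p])
  finally show ?thesis .
qed

lemma Rho_monsum: assumes p: "(t, x) \<in> \<Omega>"
  shows "monsum (Rho1 @ Rho3 c A B) v t x = rho c A B t x"
  unfolding Rho1_def Rho3_def rho_def monsum_app monsum_mul monsum_K monsum_U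
  unfolding vk_V[OF p, symmetric] dx_vk_monsum[OF p, symmetric]
  by (simp add: power2_eq_square power3_eq_cube numeral_2_eq_2 algebra_simps)

end

context sol begin

lemma base1: assumes p: "(t, x) \<in> \<Omega>"
  shows "Lop \<alpha> a v (vk \<alpha> v 1) t x = (real 1 - 1) * deriv \<alpha> (v t x) * vk \<alpha> v 1 t x * dx (dx (vk \<alpha> v 1)) t x
      + ((\<lambda>y. 0) (v t x) * (vk \<alpha> v 1 t x)\<^sup>2 + (\<lambda>y. 0) (v t x) * vk \<alpha> v 2 t x) * dx (vk \<alpha> v 1) t x + monsum T1 v t x"
proof -
  have z: "\<forall>(t, x)\<in>\<Omega>. Lop \<alpha> a v v t x = (\<lambda>t x. 0) t x" using pde by auto
  have "dx (Lop \<alpha> a v v) t x = dx (\<lambda>t x. 0) t x" by (rule cong_dx[OF openO z p])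
  then have d0: "dx (Lop \<alpha> a v v) t x = 0" by (simp add: dx_const)
  have "Lop \<alpha> a v (Dop v) t x = \<alpha> (v t x) * dx (Lop \<alpha> a v v) t x
     - deriv a (v t x) * \<alpha> (v t x) * dx v t x * dx v t x
     - deriv \<alpha> (v t x) * dx (vk \<alpha> v 2) t x * dx v t x
     + deriv \<alpha> (v t x) * dx v t x * dx (Dop (Dop v)) t x" by (rule comm[OF R_v p])
  then show ?thesis unfolding vk1 by (simp add: d0 vk2[symmetric] T1_def monsum_def)
qed

end


definition wts :: "((real \<Rightarrow> real) \<times> nat list) list \<Rightarrow> nat \<Rightarrow> bool" where
  "wts X k \<longleftrightarrow> (\<forall>p\<in>set X. sum_list (snd p) = k + 1 \<or> sum_list (snd p) = k + 3)"

lemma DxM_sum: "p \<in> set (DxM X) \<Longrightarrow> \<exists>q\<in>set X. sum_list (snd p) = Suc (sum_list (snd q))"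
  by (auto simp: DxM_def dtermM_def hom_dprodM) (metis snd_conv)+

lemma wts_app: "wts X k \<Longrightarrow> wts Y k \<Longrightarrow> wts (X @ Y) k" by (auto simp: wts_def)
lemma wts_hom: "hom X n \<Longrightarrow> n = k + 1 \<or> n = k + 3 \<Longrightarrow> wts X k" by (auto simp: wts_def hom_def)
lemma wts_KDxM: assumes "wts T k" shows "wts (mulL (K \<beta>) (DxM T)) (Suc k)"
  unfolding wts_def
proof
  fix p assume "p \<in> set (mulL (K \<beta>) (DxM T))"
  then obtain \<beta>' ws \<gamma> zs where p: "(\<beta>', ws) \<in> set (K \<beta>)" "(\<gamma>, zs) \<in> set (DxM T)" "p = (\<lambda>y. \<beta>' y * \<gamma> y, ws @ zs)"
    using set_mulL[of p "K \<beta>"] by blast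
  have ws: "ws = []" using p(1) by (simp add: K_def)
  obtain q where q: "q \<in> set T" "sum_list zs = Suc (sum_list (snd q))" using DxM_sum[OF p(2)] by auto
  have "sum_list (snd q) = k + 1 \<or> sum_list (snd q) = k + 3" using assms q(1) by (auto simp: wts_def)
  then show "sum_list (snd p) = Suc k + 1 \<or> sum_list (snd p) = Suc k + 3" using p(3) ws q(2) by auto
qed

lemma hom_K: "hom (K \<beta>) 0" by (simp add: hom_def K_def)
lemma ordle_K: "ordle (K \<beta>) n" by (simp add: ordle_def K_def)

context coef begin

definition glc :: "((real \<Rightarrow> real) \<times> nat list) list \<Rightarrow> bool" where
  "glc X \<longleftrightarrow> (\<forall>p\<in>set X. good (fst p))"

lemma glc_app: "glc X \<Longrightarrow> glc Y \<Longrightarrow> glc (X @ Y)" by (auto simp: glc_def)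
lemma glc_mul: assumes "glc X" "glc Y" shows "glc (mulL X Y)"
  unfolding glc_def
proof
  fix p assume "p \<in> set (mulL X Y)"
  then obtain \<beta> ws \<gamma> zs where p: "(\<beta>, ws) \<in> set X" "(\<gamma>, zs) \<in> set Y" "p = (\<lambda>y. \<beta> y * \<gamma> y, ws @ zs)"
    using set_mulL by blast
  have "good \<beta>" "good \<gamma>" using assms p by (auto simp: glc_def)
  then show "good (fst p)" using p(3) by (simp add: gmul)
qed
lemma glc_DxM: "glc X \<Longrightarrow> glc (DxM X)"
  by (auto simp: glc_def DxM_def dtermM_def good_deriv)
lemma glc_K: "good \<beta> \<Longrightarrow> glc (K \<beta>)" by (simp add: glc_def K_def)
lemma glc_U: "glc (U g)" by (simp add: glc_def U_def gconst)
lemma glc_V: "glc (V \<alpha> j)"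
proof (induction j)
  case 0 then show ?case by (simp add: glc_def gid)
next
  case (Suc j) then show ?case by (simp add: glc_mul glc_DxM glc_K[OF good_alpha, unfolded K_def])
qed

lemma gneg: "good f \<Longrightarrow> good (\<lambda>y. - f y)"
proof -
  assume "good f"
  then have "good (\<lambda>y. (-1) * f y)" by (intro gmul gconst)
  then show ?thesis by (rule gcong) simp
qed

definition Tn :: "real \<Rightarrow> (real \<Rightarrow> real) \<Rightarrow> (real \<Rightarrow> real) \<Rightarrow> ((real \<Rightarrow> real) \<times> nat list) list \<Rightarrow> nat \<Rightarrow> ((real \<Rightarrow> real) \<times> nat list) list" where
  "Tn c A B T k = mulL (K \<alpha>) (DxM T) @ mulL (Rho1 @ Rho3 c A B) (DxM (V \<alpha> k))"

lemma hom_Rho1: "hom Rho1 1"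
  by (simp add: Rho1_def hom_def mulL_def K_def U_def)
lemma hom_Rho3: "hom (Rho3 c A B) 3"
  by (simp add: Rho3_def hom_def mulL_def K_def U_def DxM_def dtermM_def numeral_2_eq_2)
lemma ordle_Rho: "ordle (Rho1 @ Rho3 c A B) 3"
  by (simp add: Rho1_def Rho3_def ordle_def mulL_def K_def U_def DxM_def dtermM_def numeral_2_eq_2)
lemma glc_Rho: "good A \<Longrightarrow> good B \<Longrightarrow> glc (Rho1 @ Rho3 c A B)"
  unfolding Rho1_def Rho3_def
  by (intro glc_app glc_mul glc_K glc_U glc_V glc_DxM good_alpha good_dalpha good_ddalpha good_a good_da
        good_deriv good_A2 good_B2 gneg gmul gconst)

lemma Tn_props:
  assumes "good A" "good B" "glc T" "ordle T k" "wts T k" "k \<ge> 2"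
  shows "glc (Tn c A B T k) \<and> ordle (Tn c A B T k) (Suc k) \<and> wts (Tn c A B T k) (Suc k)"
proof (intro conjI)
  show "glc (Tn c A B T k)" unfolding Tn_def
    by (intro glc_app glc_mul glc_K glc_DxM glc_V glc_Rho assms good_alpha)
  have o1: "ordle (Rho1 @ Rho3 c A B) (Suc k)" using ordle_Rho by (rule ordle_mono) (use assms(6) in auto)
  show "ordle (Tn c A B T k) (Suc k)" unfolding Tn_def
    by (intro ordle_app ordle_mul ordle_K ordle_DxM assms(4) ordle_V o1)
  have h: "hom (mulL (Rho1 @ Rho3 c A B) (DxM (V \<alpha> k))) 0 \<or> True" by simp
  have w1: "wts (mulL Rho1 (DxM (V \<alpha> k))) (Suc k)"
    by (rule wts_hom[OF hom_mul[OF hom_Rho1 hom_DxM[OF hom_V]]]) simp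
  have w3: "wts (mulL (Rho3 c A B) (DxM (V \<alpha> k))) (Suc k)"
    by (rule wts_hom[OF hom_mul[OF hom_Rho3 hom_DxM[OF hom_V]]]) simp
  have "mulL (Rho1 @ Rho3 c A B) (DxM (V \<alpha> k)) = mulL Rho1 (DxM (V \<alpha> k)) @ mulL (Rho3 c A B) (DxM (V \<alpha> k))"
    by (simp add: mulL_def)
  then show "wts (Tn c A B T k) (Suc k)" unfolding Tn_def
    by (simp add: wts_app wts_KDxM assms(5) w1 w3)
qed

end


context coef begin
lemma good_T1c: "good (\<lambda>y. - (deriv a y * \<alpha> y))" by (intro gneg gmul good_da good_alpha)
end

context sm begin
lemma glist_glc: "glist X \<longleftrightarrow> glc X" by (auto simp: glist_def glc_def)
end

context sol begin

lemma step_list: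
  assumes gA: "good A" and gB: "good B" and gT: "glc T"
  and IH: "\<forall>(t, x)\<in>\<Omega>. Lop \<alpha> a v (vk \<alpha> v k) t x = c * deriv \<alpha> (v t x) * vk \<alpha> v 1 t x * dx (dx (vk \<alpha> v k)) t x
      + (A (v t x) * (vk \<alpha> v 1 t x)\<^sup>2 + B (v t x) * vk \<alpha> v 2 t x) * dx (vk \<alpha> v k) t x + monsum T v t x"
  and p: "(t, x) \<in> \<Omega>"
  shows "Lop \<alpha> a v (vk \<alpha> v (Suc k)) t x = (c + 1) * deriv \<alpha> (v t x) * vk \<alpha> v 1 t x * dx (dx (vk \<alpha> v (Suc k))) t x
      + (A2 c A (v t x) * (vk \<alpha> v 1 t x)\<^sup>2 + B2 c B (v t x) * vk \<alpha> v 2 t x) * dx (vk \<alpha> v (Suc k)) t x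
      + monsum (Tn c A B T k) v t x"
proof -
  have gl: "glist T" using gT by (simp add: glist_glc)
  have "monsum (Tn c A B T k) v t x = \<alpha> (v t x) * dx (monsum T v) t x + rho c A B t x * dx (vk \<alpha> v k) t x"
    unfolding Tn_def monsum_app monsum_mul monsum_K
    by (simp add: dx_monsum[OF gl p] Rho_monsum[OF p, unfolded monsum_app] dx_vk_monsum[OF p])
  then show ?thesis using step[OF gA gB R_monsum[OF gl] IH p] by simp
qed

definition Bb :: "real \<Rightarrow> real" where
  "Bb = (\<lambda>y. B2 0 (\<lambda>y. 0) y + - (deriv \<alpha> y * inverse (\<alpha> y)))"

lemma k2: assumes p: "(t, x) \<in> \<Omega>"
  shows "Lop \<alpha> a v (vk \<alpha> v 2) t x = (real 2 - 1) * deriv \<alpha> (v t x) * vk \<alpha> v 1 t x * dx (dx (vk \<alpha> v 2)) t x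
      + (A2 0 (\<lambda>y. 0) (v t x) * (vk \<alpha> v 1 t x)\<^sup>2 + Bb (v t x) * vk \<alpha> v 2 t x) * dx (vk \<alpha> v 2) t x
      + monsum (mulL (K \<alpha>) (DxM T1) @ mulL Rho1 (DxM (V \<alpha> 1))) v t x"
proof -
  have gT1: "glist T1" unfolding T1_def glist_def by (simp add: good_T1c)
  have IH: "\<forall>(t, x)\<in>\<Omega>. Lop \<alpha> a v (vk \<alpha> v 1) t x = (real 1 - 1) * deriv \<alpha> (v t x) * vk \<alpha> v 1 t x * dx (dx (vk \<alpha> v 1)) t x
      + ((\<lambda>y. 0) (v t x) * (vk \<alpha> v 1 t x)\<^sup>2 + (\<lambda>y. 0) (v t x) * vk \<alpha> v 2 t x) * dx (vk \<alpha> v 1) t x + monsum T1 v t x"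
    using base1 by blast
  have S: "Lop \<alpha> a v (vk \<alpha> v (Suc 1)) t x = (real 1 - 1 + 1) * deriv \<alpha> (v t x) * vk \<alpha> v 1 t x * dx (dx (vk \<alpha> v (Suc 1))) t x
      + (A2 (real 1 - 1) (\<lambda>y. 0) (v t x) * (vk \<alpha> v 1 t x)\<^sup>2 + B2 (real 1 - 1) (\<lambda>y. 0) (v t x) * vk \<alpha> v 2 t x) * dx (vk \<alpha> v (Suc 1)) t x
      + (\<alpha> (v t x) * dx (monsum T1 v) t x + rho (real 1 - 1) (\<lambda>y. 0) (\<lambda>y. 0) t x * dx (vk \<alpha> v 1) t x)"
    by (rule step[OF gconst gconst R_monsum[OF gT1] IH p])
  have two: "Suc 1 = 2" by simp
  have M: "monsum (mulL (K \<alpha>) (DxM T1) @ mulL Rho1 (DxM (V \<alpha> 1))) v t x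
      = \<alpha> (v t x) * dx (monsum T1 v) t x + (- (deriv a (v t x) * \<alpha> (v t x)) * dx v t x) * dx (vk \<alpha> v 1) t x"
    unfolding monsum_app monsum_mul monsum_K Rho1_def monsum_U
    by (simp add: dx_monsum[OF gT1 p] dx_vk_monsum[OF p])
  have W1: "vk \<alpha> v 1 t x = \<alpha> (v t x) * dx v t x" unfolding vk1 Dop_def by simp
  have W2: "vk \<alpha> v 2 t x = \<alpha> (v t x) * dx (vk \<alpha> v 1) t x" by (simp add: vk_Suc numeral_2_eq_2)
  have anz: "\<alpha> (v t x) \<noteq> 0" using apos vI p by fastforce
  show ?thesis
    unfolding M S[unfolded two]
    unfolding rho_def A2_def B2_def Bb_def W2 W1
    using anz by (simp add: field_simps power2_eq_square power3_eq_cube)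
qed

end

context coef begin

lemma good_Bb: "good (\<lambda>y. B2 0 (\<lambda>y. 0) y + - (deriv \<alpha> y * inverse (\<alpha> y)))"
  by (intro gadd good_B2 gconst gneg gmul good_dalpha ginv)

lemma main:
  assumes k: "k \<ge> 1"
  shows "\<exists>A B T. good A \<and> good B \<and> glc T \<and> ordle T k \<and> wts T k \<and>
    (\<forall>\<Omega> v. sol I \<alpha> a \<Omega> v \<longrightarrow> (\<forall>(t, x)\<in>\<Omega>. Lop \<alpha> a v (vk \<alpha> v k) t x =
       (real k - 1) * deriv \<alpha> (v t x) * vk \<alpha> v 1 t x * dx (dx (vk \<alpha> v k)) t x
       + (A (v t x) * (vk \<alpha> v 1 t x)\<^sup>2 + B (v t x) * vk \<alpha> v 2 t x) * dx (vk \<alpha> v k) t x + monsum T v t x))"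
proof (cases "k = 1")
  case True
  have gT1: "glc T1" unfolding T1_def glc_def by (simp add: good_T1c)
  show ?thesis
  proof (intro exI conjI allI impI)
    show "good (\<lambda>y. 0)" by (rule gconst)
    show "good (\<lambda>y. 0)" by (rule gconst)
    show "glc T1" by (rule gT1)
    show "ordle T1 k" using True by (simp add: T1_def ordle_def)
    show "wts T1 k" using True by (simp add: T1_def wts_def)
    fix \<Omega> v assume "sol I \<alpha> a \<Omega> v"
    then interpret s: sol I \<alpha> a \<Omega> v .
    show "\<forall>(t, x)\<in>\<Omega>. Lop \<alpha> a v (vk \<alpha> v k) t x =
       (real k - 1) * deriv \<alpha> (v t x) * vk \<alpha> v 1 t x * dx (dx (vk \<alpha> v k)) t x
       + ((\<lambda>y. 0) (v t x) * (vk \<alpha> v 1 t x)\<^sup>2 + (\<lambda>y. 0) (v t x) * vk \<alpha> v 2 t x) * dx (vk \<alpha> v k) t x + monsum T1 v t x"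
      using s.base1 True by auto
  qed
next
  case False
  then have k2: "k \<ge> 2" using k by auto
  then show ?thesis
  proof (induction k rule: nat_induct_at_least)
    case base
    have gT1: "glc T1" unfolding T1_def glc_def by (simp add: good_T1c)
    have oT1: "ordle T1 1" by (simp add: T1_def ordle_def)
    have wT1: "wts T1 1" by (simp add: T1_def wts_def)
    define T2 where "T2 = mulL (K \<alpha>) (DxM T1) @ mulL Rho1 (DxM (V \<alpha> 1))"
    have gT2: "glc T2" unfolding T2_def Rho1_def
      by (intro glc_app glc_mul glc_K glc_DxM glc_V glc_U gT1 good_alpha gneg gmul good_da)
    have oR: "ordle Rho1 2" by (simp add: Rho1_def ordle_def mulL_def K_def U_def)
    have two: "Suc 1 = (2::nat)" by simp
    have o1: "ordle (DxM T1) 2" using ordle_DxM[OF oT1] unfolding two .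
    have o2: "ordle (DxM (V \<alpha> 1)) 2" using ordle_DxM[OF ordle_V[of \<alpha> 1]] unfolding two .
    have oT2: "ordle T2 2" unfolding T2_def
      by (intro ordle_app ordle_mul ordle_K o1 o2 oR)
    have wT2: "wts T2 2" unfolding T2_def
    proof (rule wts_app)
      show "wts (mulL (K \<alpha>) (DxM T1)) 2" using wts_KDxM[OF wT1, of \<alpha>] unfolding two .
      show "wts (mulL Rho1 (DxM (V \<alpha> 1))) 2"
        by (rule wts_hom[OF hom_mul[OF hom_Rho1 hom_DxM[OF hom_V]]]) simp
    qed
    show ?case
    proof (intro exI conjI allI impI)
      show "good (A2 0 (\<lambda>y. 0))" by (rule good_A2[OF gconst])
      show "good (\<lambda>y. B2 0 (\<lambda>y. 0) y + - (deriv \<alpha> y * inverse (\<alpha> y)))" by (rule good_Bb)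
      show "glc T2" "ordle T2 2" "wts T2 2" by (fact gT2 oT2 wT2)+
      fix \<Omega> v assume "sol I \<alpha> a \<Omega> v"
      then interpret s: sol I \<alpha> a \<Omega> v .
      show "\<forall>(t, x)\<in>\<Omega>. Lop \<alpha> a v (vk \<alpha> v 2) t x =
       (real 2 - 1) * deriv \<alpha> (v t x) * vk \<alpha> v 1 t x * dx (dx (vk \<alpha> v 2)) t x
       + (A2 0 (\<lambda>y. 0) (v t x) * (vk \<alpha> v 1 t x)\<^sup>2 + (\<lambda>y. B2 0 (\<lambda>y. 0) y + - (deriv \<alpha> y * inverse (\<alpha> y))) (v t x) * vk \<alpha> v 2 t x) * dx (vk \<alpha> v 2) t x + monsum T2 v t x"
        using s.k2 unfolding s.Bb_def T2_def by auto
    qed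
  next
    case (Suc n)
    then obtain A B T where H: "good A" "good B" "glc T" "ordle T n" "wts T n"
      "\<forall>\<Omega> v. sol I \<alpha> a \<Omega> v \<longrightarrow> (\<forall>(t, x)\<in>\<Omega>. Lop \<alpha> a v (vk \<alpha> v n) t x =
       (real n - 1) * deriv \<alpha> (v t x) * vk \<alpha> v 1 t x * dx (dx (vk \<alpha> v n)) t x
       + (A (v t x) * (vk \<alpha> v 1 t x)\<^sup>2 + B (v t x) * vk \<alpha> v 2 t x) * dx (vk \<alpha> v n) t x + monsum T v t x)"
      by blast
    have P: "glc (Tn (real n - 1) A B T n) \<and> ordle (Tn (real n - 1) A B T n) (Suc n) \<and> wts (Tn (real n - 1) A B T n) (Suc n)"
      by (rule Tn_props[OF H(1-5) Suc.hyps(1)])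
    show ?case
    proof (intro exI conjI allI impI)
      show "good (A2 (real n - 1) A)" by (rule good_A2[OF H(1)])
      show "good (B2 (real n - 1) B)" by (rule good_B2[OF H(2)])
      show "glc (Tn (real n - 1) A B T n)" "ordle (Tn (real n - 1) A B T n) (Suc n)" "wts (Tn (real n - 1) A B T n) (Suc n)"
        using P by auto
      fix \<Omega> v assume so: "sol I \<alpha> a \<Omega> v"
      then interpret s: sol I \<alpha> a \<Omega> v .
      have IH: "\<forall>(t, x)\<in>\<Omega>. Lop \<alpha> a v (vk \<alpha> v n) t x =
       (real n - 1) * deriv \<alpha> (v t x) * vk \<alpha> v 1 t x * dx (dx (vk \<alpha> v n)) t x
       + (A (v t x) * (vk \<alpha> v 1 t x)\<^sup>2 + B (v t x) * vk \<alpha> v 2 t x) * dx (vk \<alpha> v n) t x + monsum T v t x"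
        using H(6) so by blast
      have e: "real (Suc n) - 1 = real n - 1 + 1" by simp
      show "\<forall>(t, x)\<in>\<Omega>. Lop \<alpha> a v (vk \<alpha> v (Suc n)) t x =
       (real (Suc n) - 1) * deriv \<alpha> (v t x) * vk \<alpha> v 1 t x * dx (dx (vk \<alpha> v (Suc n))) t x
       + (A2 (real n - 1) A (v t x) * (vk \<alpha> v 1 t x)\<^sup>2 + B2 (real n - 1) B (v t x) * vk \<alpha> v 2 t x) * dx (vk \<alpha> v (Suc n)) t x
       + monsum (Tn (real n - 1) A B T n) v t x"
        unfolding e using s.step_list[OF H(1-3) IH] by blast
    qed
  qed
qed

end


theorem mainTheorem3:
  fixes I :: "real set" and \<alpha> a :: "real \<Rightarrow> real"
  assumes "open I" and "is_interval I"
    and "smooth_on I \<alpha>" and "smooth_on I a"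
    and "\<forall>y\<in>I. \<alpha> y > 0"
  shows "\<forall>k::nat. k \<ge> 1 \<longrightarrow>
    (\<exists>A B :: real \<Rightarrow> real. \<exists>ts :: ((real \<Rightarrow> real) \<times> nat list) list.
       continuous_on I A \<and> continuous_on I B \<and>
       (\<forall>(\<beta>, gs) \<in> set ts. continuous_on I \<beta> \<and>
            (\<forall>g\<in>set gs. 1 \<le> g \<and> g \<le> k) \<and>
            (sum_list gs = k + 1 \<or> sum_list gs = k + 3)) \<and>
       (\<forall>(\<Omega> :: (real \<times> real) set) (v :: real \<Rightarrow> real \<Rightarrow> real).
          open \<Omega> \<and> smooth2_on \<Omega> v \<and> (\<forall>(t, x)\<in>\<Omega>. v t x \<in> I) \<and>
          (\<forall>(t, x)\<in>\<Omega>. Lop \<alpha> a v v t x = 0) \<longrightarrow>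
          (\<forall>(t, x)\<in>\<Omega>.
             Lop \<alpha> a v (vk \<alpha> v k) t x =
               (real k - 1) * deriv \<alpha> (v t x) * vk \<alpha> v 1 t x * dx (dx (vk \<alpha> v k)) t x
             + (A (v t x) * (vk \<alpha> v 1 t x)\<^sup>2 + B (v t x) * vk \<alpha> v 2 t x) * dx (vk \<alpha> v k) t x
             + monsum ts v t x)))"
proof (intro allI impI)
  fix k :: nat assume k: "k \<ge> 1"
  interpret c: coef I \<alpha> a using assms by (simp add: coef_def)
  obtain A B T where H: "c.good A" "c.good B" "c.glc T" "ordle T k" "wts T k"
    "\<forall>\<Omega> v. sol I \<alpha> a \<Omega> v \<longrightarrow> (\<forall>(t, x)\<in>\<Omega>. Lop \<alpha> a v (vk \<alpha> v k) t x =
       (real k - 1) * deriv \<alpha> (v t x) * vk \<alpha> v 1 t x * dx (dx (vk \<alpha> v k)) t x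
       + (A (v t x) * (vk \<alpha> v 1 t x)\<^sup>2 + B (v t x) * vk \<alpha> v 2 t x) * dx (vk \<alpha> v k) t x + monsum T v t x)"
    using c.main[OF k] by blast
  show "\<exists>A B :: real \<Rightarrow> real. \<exists>ts :: ((real \<Rightarrow> real) \<times> nat list) list.
       continuous_on I A \<and> continuous_on I B \<and>
       (\<forall>(\<beta>, gs) \<in> set ts. continuous_on I \<beta> \<and>
            (\<forall>g\<in>set gs. 1 \<le> g \<and> g \<le> k) \<and>
            (sum_list gs = k + 1 \<or> sum_list gs = k + 3)) \<and>
       (\<forall>(\<Omega> :: (real \<times> real) set) (v :: real \<Rightarrow> real \<Rightarrow> real).
          open \<Omega> \<and> smooth2_on \<Omega> v \<and> (\<forall>(t, x)\<in>\<Omega>. v t x \<in> I) \<and>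
          (\<forall>(t, x)\<in>\<Omega>. Lop \<alpha> a v v t x = 0) \<longrightarrow>
          (\<forall>(t, x)\<in>\<Omega>.
             Lop \<alpha> a v (vk \<alpha> v k) t x =
               (real k - 1) * deriv \<alpha> (v t x) * vk \<alpha> v 1 t x * dx (dx (vk \<alpha> v k)) t x
             + (A (v t x) * (vk \<alpha> v 1 t x)\<^sup>2 + B (v t x) * vk \<alpha> v 2 t x) * dx (vk \<alpha> v k) t x
             + monsum ts v t x))"
  proof (intro exI conjI allI impI)
    show "continuous_on I A" by (rule c.good_cont[OF H(1)])
    show "continuous_on I B" by (rule c.good_cont[OF H(2)])
    show "\<forall>(\<beta>, gs) \<in> set T. continuous_on I \<beta> \<and> (\<forall>g\<in>set gs. 1 \<le> g \<and> g \<le> k) \<and>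
            (sum_list gs = k + 1 \<or> sum_list gs = k + 3)"
    proof (clarify)
      fix \<beta> gs assume m: "(\<beta>, gs) \<in> set T"
      have "c.good (fst (\<beta>, gs))" using H(3) m unfolding c.glc_def by blast
      then have "continuous_on I \<beta>" using c.good_cont by simp
      moreover have "\<forall>g\<in>set (snd (\<beta>, gs)). 1 \<le> g \<and> g \<le> k" using H(4) m unfolding ordle_def by blast
      moreover have "sum_list (snd (\<beta>, gs)) = k + 1 \<or> sum_list (snd (\<beta>, gs)) = k + 3" using H(5) m unfolding wts_def by blast
      ultimately show "continuous_on I \<beta> \<and> (\<forall>g\<in>set gs. 1 \<le> g \<and> g \<le> k) \<and> (sum_list gs = k + 1 \<or> sum_list gs = k + 3)"
        by simp
    qed
    fix \<Omega> :: "(real \<times> real) set" and v :: "real \<Rightarrow> real \<Rightarrow> real"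
    assume h: "open \<Omega> \<and> smooth2_on \<Omega> v \<and> (\<forall>(t, x)\<in>\<Omega>. v t x \<in> I) \<and> (\<forall>(t, x)\<in>\<Omega>. Lop \<alpha> a v v t x = 0)"
    have "sol I \<alpha> a \<Omega> v"
      using assms h by (simp add: sol_def sm_def sol_axioms_def sm_axioms_def coef_def)
    then show "\<forall>(t, x)\<in>\<Omega>. Lop \<alpha> a v (vk \<alpha> v k) t x =
               (real k - 1) * deriv \<alpha> (v t x) * vk \<alpha> v 1 t x * dx (dx (vk \<alpha> v k)) t x
             + (A (v t x) * (vk \<alpha> v 1 t x)\<^sup>2 + B (v t x) * vk \<alpha> v 2 t x) * dx (vk \<alpha> v k) t x
             + monsum T v t x" using H(6) by blast
  qed
qed


end
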